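(* Let $U=\langle d^*,e^*,f^*\rangle\le W'^*$ and $W''^*:=W'^*/U$, a $3$-dimensional $G$-module with basis the images of $a^*,b^*,c^*$, so that $S[W''^*]=\mathbb F_2[a^*,b^*,c^*]$. The $G$-equivariant surjection $\rho\colon S[W'^*]\to S[W''^*]$ sending $a^*,b^*,c^*$ to themselves and $d^*,e^*,f^*$ to $0$ restricts to a surjective map $S[W'^*]^G\to S[W''^*]^G$. Moreover $S[W''^*]^G=\mathbb F_2[c_0,c_1,c_2]$ is a polynomial ring on the Dickson invariants $c_2=a^{*4}+b^{*4}+c^{*4}+a^{*2}b^{*2}+a^{*2}c^{*2}+b^{*2}c^{*2}+a^{*2}b^*c^*+a^*b^{*2}c^*+a^*b^*c^{*2}$, $c_1=a^{*4}b^{*2}+a^{*2}b^{*4}+a^{*4}c^{*2}+a^{*2}c^{*4}+b^{*4}c^{*2}+b^{*2}c^{*4}+a^{*4}b^*c^*+a^*b^{*4}c^*+a^*b^*c^{*4}+a^{*2}b^{*2}c^{*2}$, $c_0=a^{*4}b^{*2}c^*+a^{*4}b^*c^{*2}+a^{*2}b^{*4}c^*+a^*b^{*4}c^{*2}+a^{*2}b^*c^{*4}+a^*b^{*2}c^{*4}$, and $c_0,c_1,c_2$ are images under $\rho$ of elements of $S[W'^*]^G$ of degrees $7,6,4$ respectively.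
   Context: $G=GL_3(\mathbb F_2)$, generated by $A=\begin{pmatrix}1&0&1\\0&1&0\\0&0&1\end{pmatrix}$ and $B=\begin{pmatrix}0&0&1\\1&0&0\\0&1&0\end{pmatrix}$. $W'^*$ is the 6-dimensional $\mathbb F_2$-vector space of row vectors with basis $a^*,b^*,c^*,d^*,e^*,f^*$, a right $G$-module via the representation $D$ with $D(A)=\begin{pmatrix}1&0&1&0&0&1\\0&1&0&0&0&0\\0&0&1&0&0&0\\0&0&0&1&1&0\\0&0&0&0&1&0\\0&0&0&0&0&1\end{pmatrix}$, $D(B)=\begin{pmatrix}0&0&1&0&0&0\\1&0&0&0&0&0\\0&1&0&0&0&0\\0&0&0&0&0&1\\0&0&0&1&0&0\\0&0&0&0&1&0\end{pmatrix}$. The subspace $\langle d^*,e^*,f^*\rangle$ is $G$-stable. $S[X]$ denotes the symmetric algebra (polynomial ring) with induced $G$-action and $S[X]^G$ its invariant ring. *)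

theory Defs
  imports "HOL-Library.Poly_Mapping" "HOL-Library.Z2"
begin

text \<open>Polynomials over F_2 = bit in variables indexed by nat
  (variable 0,1,2,3,4,5 stand for a*,b*,c*,d*,e*,f*).
  A monomial is a finitely supported exponent vector nat =>0 nat.\<close>

type_synonym mono = "nat \<Rightarrow>\<^sub>0 nat"
type_synonym mpoly = "mono \<Rightarrow>\<^sub>0 bit"

definition Const :: "bit \<Rightarrow> mpoly" where
  "Const c = Poly_Mapping.single 0 c"

definition Var :: "nat \<Rightarrow> mpoly" where
  "Var i = Poly_Mapping.single (Poly_Mapping.single i 1) 1"

definition eval_subst :: "(nat \<Rightarrow> mpoly) \<Rightarrow> mpoly \<Rightarrow> mpoly" where
  "eval_subst \<sigma> p =
     (\<Sum>m::mono\<in>Poly_Mapping.keys p. Const (Poly_Mapping.lookup p m) * (\<Prod>i::nat\<in>Poly_Mapping.keys m. \<sigma> i ^ Poly_Mapping.lookup m i))"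

definition polys_in :: "nat \<Rightarrow> mpoly set" where
  "polys_in n = {p. \<forall>m\<in>Poly_Mapping.keys p. Poly_Mapping.keys m \<subseteq> {..<n}}"

definition tdeg :: "mono \<Rightarrow> nat" where
  "tdeg m = (\<Sum>i\<in>Poly_Mapping.keys m. Poly_Mapping.lookup m i)"

definition homogeneous :: "nat \<Rightarrow> mpoly \<Rightarrow> bool" where
  "homogeneous d p \<longleftrightarrow> (\<forall>m\<in>Poly_Mapping.keys p. tdeg m = d)"

text \<open>Matrices over F_2 as functions nat => nat => bit (entries outside the
  relevant index range are irrelevant).\<close>
type_synonym mat = "nat \<Rightarrow> nat \<Rightarrow> bit"

definition matmul :: "nat \<Rightarrow> mat \<Rightarrow> mat \<Rightarrow> mat" where
  "matmul n M N = (\<lambda>i j. \<Sum>k<n. M i k * N k j)"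

text \<open>Induced (right) action of an n x n matrix M on the polynomial ring on the
  basis vectors x_0..x_{n-1} of the row space: x_i |-> x_i M = sum_j M i j x_j.\<close>
definition act :: "nat \<Rightarrow> mat \<Rightarrow> mpoly \<Rightarrow> mpoly" where
  "act n M p = eval_subst (\<lambda>i. if i < n then (\<Sum>j<n. Const (M i j) * Var j) else Var i) p"

definition mat_of_list :: "bit list list \<Rightarrow> mat" where
  "mat_of_list rows = (\<lambda>i j. if i < length rows \<and> j < length (rows ! i) then rows ! i ! j else 0)"

definition DA :: mat where
  "DA = mat_of_list
     [[1,0,1,0,0,1],
      [0,1,0,0,0,0],
      [0,0,1,0,0,0],
      [0,0,0,1,1,0],
      [0,0,0,0,1,0],
      [0,0,0,0,0,1]]"

definition DB :: mat where
  "DB = mat_of_list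
     [[0,0,1,0,0,0],
      [1,0,0,0,0,0],
      [0,1,0,0,0,0],
      [0,0,0,0,0,1],
      [0,0,0,1,0,0],
      [0,0,0,0,1,0]]"

text \<open>D(G): the image of G = GL_3(F_2) = <A,B> under the representation D,
  i.e. the closure of {D(A), D(B)} under matrix multiplication (a finite
  group, so closure under products is the generated group).\<close>
inductive_set DG :: "mat set" where
  gen_A: "DA \<in> DG"
| gen_B: "DB \<in> DG"
| mult: "M \<in> DG \<Longrightarrow> N \<in> DG \<Longrightarrow> matmul 6 M N \<in> DG"

text \<open>S[W'*] = polys_in 6, S[W''*] = polys_in 3. G acts on W''* = W'*/U
  via the top-left 3 x 3 block of D(g) (U = <d*,e*,f*> is stable).\<close>
definition Inv6 :: "mpoly set" where
  "Inv6 = {p \<in> polys_in 6. \<forall>g\<in>DG. act 6 g p = p}"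

definition Inv3 :: "mpoly set" where
  "Inv3 = {p \<in> polys_in 3. \<forall>g\<in>DG. act 3 g p = p}"

definition rho :: "mpoly \<Rightarrow> mpoly" where
  "rho p = eval_subst (\<lambda>i. if i < 3 then Var i else 0) p"

abbreviation "xa \<equiv> Var 0"
abbreviation "xb \<equiv> Var 1"
abbreviation "xc \<equiv> Var 2"

definition dick2 :: mpoly where
  "dick2 = xa^4 + xb^4 + xc^4 + xa^2*xb^2 + xa^2*xc^2 + xb^2*xc^2
         + xa^2*xb*xc + xa*xb^2*xc + xa*xb*xc^2"

definition dick1 :: mpoly where
  "dick1 = xa^4*xb^2 + xa^2*xb^4 + xa^4*xc^2 + xa^2*xc^4 + xb^4*xc^2 + xb^2*xc^4
         + xa^4*xb*xc + xa*xb^4*xc + xa*xb*xc^4 + xa^2*xb^2*xc^2"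

definition dick0 :: mpoly where
  "dick0 = xa^4*xb^2*xc + xa^4*xb*xc^2 + xa^2*xb^4*xc + xa*xb^4*xc^2
         + xa^2*xb*xc^4 + xa*xb^2*xc^4"

definition dickson_eval :: "mpoly \<Rightarrow> mpoly" where
  "dickson_eval = eval_subst (\<lambda>i. if i = 0 then dick0 else if i = 1 then dick1
                                  else if i = 2 then dick2 else 0)"

end

theory Submission
  imports Defs "HOL-Library.Multiset"
begin

abbreviation (input) LK where "LK \<equiv> Poly_Mapping.lookup"
abbreviation (input) KS where "KS \<equiv> Poly_Mapping.keys"
abbreviation (input) SG where "SG \<equiv> Poly_Mapping.single"

declare add_bit_eq_xor [simp del] mult_bit_eq_and [simp del]

lemma bit_cases2: "(c::bit) = 0 \<or> c = 1"
  by (metis bit_not_zero_iff)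

lemma bit_sq [simp]: "(c::bit) * c = c"
  using bit_cases2[of c] by auto

lemma two_mpoly [simp]: "(2::mpoly) = 0"
  by (metis bit_2_eq_0 single_numeral single_zero)

lemma uminus_mpoly [simp]: "- (p::mpoly) = p"
  by (rule poly_mapping_eqI) simp

lemma minus_mpoly [simp]: "(p::mpoly) - q = p + q"
  by (metis diff_conv_add_uminus uminus_mpoly)

lemma add_self_mpoly [simp]: "(p::mpoly) + p = 0"
  by (metis minus_mpoly right_minus_eq)

lemma add_self_mpoly2 [simp]: "(p::mpoly) + (p + q) = q"
  by (metis add.assoc add.left_neutral add_self_mpoly)

lemma add_eq_iff_mpoly: "(p::mpoly) = q \<longleftrightarrow> p + q = 0"
  by (metis minus_mpoly right_minus_eq)

lemma sq_add_mpoly: "((p::mpoly) + q)^2 = p^2 + q^2"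
proof -
  have "(p + q)^2 = p^2 + q^2 + 2 * (p * q)" by algebra
  then show ?thesis by simp
qed

lemma Const_0 [simp]: "Const 0 = 0" by (simp add: Const_def)
lemma Const_1 [simp]: "Const 1 = 1" by (simp add: Const_def)
lemma Const_add: "Const (a + b) = Const a + Const b" unfolding Const_def by (rule single_add)
lemma Const_mult: "Const (a * b) = Const a * Const b" by (simp add: Const_def mult_single)
lemma Const_single: "Const c * SG m d = SG m (c * d)" by (simp add: Const_def mult_single)
lemma Const_sq: "Const c * Const c = Const c"
  by (metis Const_mult bit_sq)

lemma poly_expand: "p = (\<Sum>m\<in>KS p. SG m (LK p m))"
proof (rule poly_mapping_eqI)
  fix k
  show "LK p k = LK (\<Sum>m\<in>KS p. SG m (LK p m)) k"
  proof (cases "k \<in> KS p")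
    case True
    have "LK (\<Sum>m\<in>KS p. SG m (LK p m)) k = (\<Sum>m\<in>KS p. LK (SG m (LK p m)) k)"
      by (simp add: lookup_sum)
    also have "\<dots> = LK (SG k (LK p k)) k + (\<Sum>m\<in>KS p - {k}. LK (SG m (LK p m)) k)"
      using True by (simp add: sum.remove)
    also have "\<dots> = LK p k"
      by (simp add: lookup_single)
    finally show ?thesis by simp
  next
    case False
    then show ?thesis
      by (auto simp: lookup_sum lookup_single when_def in_keys_iff intro!: sum.neutral)
  qed
qed

definition mv :: "(nat \<Rightarrow> mpoly) \<Rightarrow> mono \<Rightarrow> mpoly" where
  "mv \<sigma> m = (\<Prod>i\<in>KS m. \<sigma> i ^ LK m i)"

lemma mv_superset:
  assumes "finite S" "KS m \<subseteq> S"
  shows "mv \<sigma> m = (\<Prod>i\<in>S. \<sigma> i ^ LK m i)"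
  unfolding mv_def
  by (rule prod.mono_neutral_left) (use assms in \<open>auto simp: in_keys_iff\<close>)

lemma mv_zero [simp]: "mv \<sigma> 0 = 1" by (simp add: mv_def)

lemma mv_add: "mv \<sigma> (m + n) = mv \<sigma> m * mv \<sigma> n"
proof -
  let ?S = "KS m \<union> KS n"
  have f: "finite ?S" by simp
  have "mv \<sigma> (m + n) = (\<Prod>i\<in>?S. \<sigma> i ^ LK (m + n) i)"
    by (rule mv_superset[OF f]) (rule keys_add)
  also have "\<dots> = (\<Prod>i\<in>?S. \<sigma> i ^ LK m i * \<sigma> i ^ LK n i)"
    by (simp add: lookup_add power_add)
  also have "\<dots> = (\<Prod>i\<in>?S. \<sigma> i ^ LK m i) * (\<Prod>i\<in>?S. \<sigma> i ^ LK n i)"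
    by (simp add: prod.distrib)
  also have "\<dots> = mv \<sigma> m * mv \<sigma> n"
    by (simp add: mv_superset[OF f])
  finally show ?thesis .
qed

lemma eval_superset:
  assumes "finite S" "KS p \<subseteq> S"
  shows "eval_subst \<sigma> p = (\<Sum>m\<in>S. Const (LK p m) * mv \<sigma> m)"
  unfolding eval_subst_def mv_def[symmetric]
  by (rule sum.mono_neutral_left) (use assms in \<open>auto simp: in_keys_iff\<close>)

lemma eval_zero [simp]: "eval_subst \<sigma> 0 = 0"
  by (simp add: eval_subst_def)

lemma eval_add: "eval_subst \<sigma> (p + q) = eval_subst \<sigma> p + eval_subst \<sigma> q"
proof -
  let ?S = "KS p \<union> KS q"
  have f: "finite ?S" by simp
  have "eval_subst \<sigma> (p + q) = (\<Sum>m\<in>?S. Const (LK (p + q) m) * mv \<sigma> m)"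
    by (rule eval_superset[OF f keys_add])
  also have "\<dots> = (\<Sum>m\<in>?S. Const (LK p m) * mv \<sigma> m) + (\<Sum>m\<in>?S. Const (LK q m) * mv \<sigma> m)"
    by (simp add: lookup_add Const_add distrib_right sum.distrib)
  also have "\<dots> = eval_subst \<sigma> p + eval_subst \<sigma> q"
    by (simp add: eval_superset[OF f])
  finally show ?thesis .
qed

lemma eval_single: "eval_subst \<sigma> (SG m c) = Const c * mv \<sigma> m"
  by (subst eval_superset[of "{m}"]) auto

lemma eval_sum: "eval_subst \<sigma> (sum f A) = (\<Sum>a\<in>A. eval_subst \<sigma> (f a))"
  by (induction A rule: infinite_finite_induct) (auto simp: eval_add)

lemma eval_mult: "eval_subst \<sigma> (p * q) = eval_subst \<sigma> p * eval_subst \<sigma> q"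
proof -
  have "p * q = (\<Sum>m\<in>KS p. SG m (LK p m)) * (\<Sum>n\<in>KS q. SG n (LK q n))"
    using poly_expand[of p] poly_expand[of q] by simp
  also have "\<dots> = (\<Sum>m\<in>KS p. \<Sum>n\<in>KS q. SG (m + n) (LK p m * LK q n))"
    by (simp add: sum_product mult_single)
  finally have pq: "p * q = \<dots>" .
  have "eval_subst \<sigma> (p * q) = (\<Sum>m\<in>KS p. \<Sum>n\<in>KS q. (Const (LK p m) * mv \<sigma> m) * (Const (LK q n) * mv \<sigma> n))"
    unfolding pq by (simp add: eval_sum eval_single Const_mult mv_add mult_ac)
  also have "\<dots> = eval_subst \<sigma> p * eval_subst \<sigma> q"
    by (simp add: sum_product eval_subst_def mv_def)
  finally show ?thesis .
qed

lemma eval_one [simp]: "eval_subst \<sigma> 1 = 1"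
  using eval_single[of \<sigma> 0 1] by simp

lemma eval_Const [simp]: "eval_subst \<sigma> (Const c) = Const c"
  using eval_single[of \<sigma> 0 c] by (simp add: Const_def)

lemma eval_Var [simp]: "eval_subst \<sigma> (Var i) = \<sigma> i"
  unfolding Var_def by (simp add: eval_single mv_def)

lemma eval_power: "eval_subst \<sigma> (p ^ k) = eval_subst \<sigma> p ^ k"
  by (induction k) (auto simp: eval_mult)

lemma eval_prod: "eval_subst \<sigma> (prod f A) = (\<Prod>a\<in>A. eval_subst \<sigma> (f a))"
  by (induction A rule: infinite_finite_induct) (auto simp: eval_mult)

lemmas eval_simps = eval_add eval_mult eval_power eval_sum eval_prod

lemma Var_power: "Var i ^ k = SG (SG i k) 1"
  by (induction k) (auto simp: Var_def mult_single single_add[symmetric] add.commute)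

lemma mv_Var: "mv Var m = SG m 1"
proof -
  have "(\<Prod>i\<in>A. Var i ^ LK m i) = SG (\<Sum>i\<in>A. SG i (LK m i)) 1" if "finite A" for A
    using that by (induction A rule: finite_induct) (auto simp: Var_power mult_single)
  then show ?thesis unfolding mv_def using poly_expand[of m] by simp
qed

lemma single_as_mv: "SG m c = Const c * mv Var m"
  by (simp add: mv_Var Const_single)

lemma hom_unique:
  assumes add: "\<And>p q. h (p + q) = h p + h q"
      and mult: "\<And>p q. h (p * q) = h p * h q"
      and const: "\<And>c. h (Const c) = Const c"
  shows "h p = eval_subst (\<lambda>i. h (Var i)) p"
proof -
  have h0: "h 0 = 0" using const[of 0] by simp
  have h1: "h 1 = 1" using const[of 1] by simp
  have hs: "h (sum f A) = (\<Sum>a\<in>A. h (f a))" for f and A :: "'x set"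
    by (induction A rule: infinite_finite_induct) (auto simp: h0 add)
  have hp: "h (prod f A) = (\<Prod>a\<in>A. h (f a))" for f and A :: "'x set"
    by (induction A rule: infinite_finite_induct) (auto simp: h1 mult)
  have hpow: "h (x ^ k) = h x ^ k" for x k
    by (induction k) (auto simp: h1 mult)
  have "h p = h (\<Sum>m\<in>KS p. Const (LK p m) * mv Var m)"
    using poly_expand[of p] single_as_mv by simp
  also have "\<dots> = (\<Sum>m\<in>KS p. Const (LK p m) * mv (\<lambda>i. h (Var i)) m)"
    by (simp add: hs mult const mv_def hp hpow)
  also have "\<dots> = eval_subst (\<lambda>i. h (Var i)) p"
    by (simp add: eval_subst_def mv_def)
  finally show ?thesis .
qed

lemma eval_Var_id [simp]: "eval_subst Var p = p"
  using hom_unique[of "\<lambda>p. p" p] by simp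

lemma eval_comp: "eval_subst \<sigma> (eval_subst \<tau> p) = eval_subst (\<lambda>i. eval_subst \<sigma> (\<tau> i)) p"
  using hom_unique[of "\<lambda>p. eval_subst \<sigma> (eval_subst \<tau> p)" p]
  by (simp add: eval_add eval_mult)

lemma Const_power2: "Const c ^ 2 = Const c"
  by (simp add: power2_eq_square Const_sq)

lemma frob: "p ^ 2 = eval_subst (\<lambda>i. Var i ^ 2) p"
  using hom_unique[of "\<lambda>p. p ^ 2" p]
  by (simp add: sq_add_mpoly power_mult_distrib Const_power2)

lemma eval_cong:
  assumes "\<And>m i. m \<in> KS p \<Longrightarrow> i \<in> KS m \<Longrightarrow> \<sigma> i = \<tau> i"
  shows "eval_subst \<sigma> p = eval_subst \<tau> p"
  unfolding eval_subst_def using assms by (auto intro!: sum.cong prod.cong)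

definition polys_on :: "nat set \<Rightarrow> mpoly \<Rightarrow> bool" where
  "polys_on V p \<longleftrightarrow> (\<forall>m\<in>KS p. KS m \<subseteq> V)"

lemma polys_in_on: "p \<in> polys_in n \<longleftrightarrow> polys_on {..<n} p"
  by (simp add: polys_in_def polys_on_def)

lemma polys_on_0 [simp]: "polys_on V 0" by (simp add: polys_on_def)
lemma polys_on_Const [simp]: "polys_on V (Const c)" by (simp add: polys_on_def Const_def)
lemma polys_on_1 [simp]: "polys_on V 1" using polys_on_Const[of V 1] by simp
lemma polys_on_Var [simp]: "polys_on V (Var i) \<longleftrightarrow> i \<in> V"
  by (simp add: polys_on_def Var_def)
lemma polys_on_add [intro]: "polys_on V p \<Longrightarrow> polys_on V q \<Longrightarrow> polys_on V (p + q)"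
  unfolding polys_on_def by (meson Un_iff keys_add subsetD)
lemma keys_add_mono: "KS ((m::mono) + n) \<subseteq> KS m \<union> KS n"
  by (rule keys_add)
lemma polys_on_mult [intro]: "polys_on V p \<Longrightarrow> polys_on V q \<Longrightarrow> polys_on V (p * q)"
  unfolding polys_on_def
proof
  fix m assume H: "\<forall>m\<in>KS p. KS m \<subseteq> V" "\<forall>m\<in>KS q. KS m \<subseteq> V" and m: "m \<in> KS (p * q)"
  then obtain a b where "m = a + b" "a \<in> KS p" "b \<in> KS q" using keys_mult[of p q] by blast
  then show "KS m \<subseteq> V" using H keys_add_mono[of a b] by blast
qed
lemma polys_on_sum [intro]: "(\<And>a. a \<in> A \<Longrightarrow> polys_on V (f a)) \<Longrightarrow> polys_on V (sum f A)"
  by (induction A rule: infinite_finite_induct) auto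
lemma polys_on_prod [intro]: "(\<And>a. a \<in> A \<Longrightarrow> polys_on V (f a)) \<Longrightarrow> polys_on V (prod f A)"
  by (induction A rule: infinite_finite_induct) auto
lemma polys_on_power [intro]: "polys_on V p \<Longrightarrow> polys_on V (p ^ k)"
  by (induction k) auto
lemma polys_on_mono: "polys_on V p \<Longrightarrow> V \<subseteq> W \<Longrightarrow> polys_on W p"
  unfolding polys_on_def by blast

lemma polys_on_eval:
  assumes "polys_on V p" "\<And>i. i \<in> V \<Longrightarrow> polys_on W (\<sigma> i)"
  shows "polys_on W (eval_subst \<sigma> p)"
  unfolding eval_subst_def
proof (intro polys_on_sum polys_on_mult polys_on_prod polys_on_power)
  fix m i assume "m \<in> KS p" "i \<in> KS m"
  then show "polys_on W (\<sigma> i)" using assms unfolding polys_on_def by blast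
qed simp

lemma eval_cong_on:
  assumes "polys_on V p" "\<And>i. i \<in> V \<Longrightarrow> \<sigma> i = \<tau> i"
  shows "eval_subst \<sigma> p = eval_subst \<tau> p"
  by (rule eval_cong) (use assms in \<open>auto simp: polys_on_def\<close>)

lemma eval_id_on:
  assumes "polys_on V p" "\<And>i. i \<in> V \<Longrightarrow> \<sigma> i = Var i"
  shows "eval_subst \<sigma> p = p"
  using eval_cong_on[OF assms] by simp

lemma tdeg_superset:
  assumes "finite S" "KS m \<subseteq> S"
  shows "tdeg m = (\<Sum>i\<in>S. LK m i)"
  unfolding tdeg_def
  by (rule sum.mono_neutral_left) (use assms in \<open>auto simp: in_keys_iff\<close>)

lemma tdeg_add: "tdeg (m + n) = tdeg m + tdeg n"
proof -
  let ?S = "KS m \<union> KS n"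
  have f: "finite ?S" by simp
  show ?thesis
    by (simp add: tdeg_superset[OF f keys_add] tdeg_superset[OF f] lookup_add sum.distrib)
qed

lemma tdeg_zero [simp]: "tdeg 0 = 0" by (simp add: tdeg_def)

definition deg_le :: "nat \<Rightarrow> mpoly \<Rightarrow> bool" where
  "deg_le N p \<longleftrightarrow> (\<forall>m\<in>KS p. tdeg m \<le> N)"

lemma deg_le_0 [simp]: "deg_le N 0" by (simp add: deg_le_def)
lemma deg_le_Const [simp]: "deg_le N (Const c)" by (simp add: deg_le_def Const_def)
lemma deg_le_1 [simp]: "deg_le N 1" using deg_le_Const[of N 1] by simp
lemma deg_le_Var: "1 \<le> N \<Longrightarrow> deg_le N (Var i)"
  by (simp add: deg_le_def Var_def tdeg_def)
lemma deg_le_mono: "deg_le N p \<Longrightarrow> N \<le> M \<Longrightarrow> deg_le M p"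
  unfolding deg_le_def by force
lemma deg_le_add [intro]: "deg_le N p \<Longrightarrow> deg_le N q \<Longrightarrow> deg_le N (p + q)"
  unfolding deg_le_def by (meson Un_iff keys_add subsetD)
lemma deg_le_mult: "deg_le N p \<Longrightarrow> deg_le M q \<Longrightarrow> deg_le (N + M) (p * q)"
  unfolding deg_le_def using keys_mult[of p q] by (force simp: tdeg_add intro: add_mono)
lemma deg_le_sum [intro]: "(\<And>a. a \<in> A \<Longrightarrow> deg_le N (f a)) \<Longrightarrow> deg_le N (sum f A)"
  by (induction A rule: infinite_finite_induct) auto
lemma deg_le_power: "deg_le N p \<Longrightarrow> deg_le (k * N) (p ^ k)"
  by (induction k) (auto dest: deg_le_mult)
lemma deg_le_prod_sum:
  "(\<And>a. a \<in> A \<Longrightarrow> deg_le (d a) (f a)) \<Longrightarrow> deg_le (sum d A) (prod f A)"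
  by (induction A rule: infinite_finite_induct) (auto intro: deg_le_mult)

lemma deg_le_exists: "\<exists>N. deg_le N p"
  by (rule exI[of _ "Max (tdeg ` KS p)"]) (simp add: deg_le_def)

lemma deg_le_mv:
  assumes "\<And>i. i \<in> KS m \<Longrightarrow> deg_le 1 (\<sigma> i)"
  shows "deg_le (tdeg m) (mv \<sigma> m)"
  unfolding mv_def tdeg_def
  by (rule deg_le_prod_sum) (use assms deg_le_power in \<open>fastforce\<close>)

lemma deg_le_eval:
  assumes "deg_le N p" "\<And>i. deg_le 1 (\<sigma> i)"
  shows "deg_le N (eval_subst \<sigma> p)"
  unfolding eval_subst_def mv_def[symmetric]
proof (rule deg_le_sum)
  fix m assume m: "m \<in> KS p"
  have "deg_le (0 + tdeg m) (Const (LK p m) * mv \<sigma> m)"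
    by (rule deg_le_mult) (auto intro: deg_le_mv assms)
  then show "deg_le N (Const (LK p m) * mv \<sigma> m)"
    using assms(1) m unfolding deg_le_def by force
qed

lemma homogeneous_0 [simp]: "homogeneous d 0" by (simp add: homogeneous_def)
lemma homogeneous_Var: "homogeneous 1 (Var i)"
  by (simp add: homogeneous_def Var_def tdeg_def)
lemma homogeneous_1: "homogeneous 0 1" by (simp add: homogeneous_def)
lemma homogeneous_add: "homogeneous d p \<Longrightarrow> homogeneous d q \<Longrightarrow> homogeneous d (p + q)"
  unfolding homogeneous_def by (meson Un_iff keys_add subsetD)
lemma homogeneous_mult: "homogeneous d p \<Longrightarrow> homogeneous e q \<Longrightarrow> homogeneous (d + e) (p * q)"
  unfolding homogeneous_def using keys_mult[of p q] by (force simp: tdeg_add)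

section \<open>Factor theorem\<close>

lemma mv_split:
  "mv \<sigma> m = \<sigma> j ^ LK m j * (\<Prod>l\<in>KS m - {j}. \<sigma> l ^ LK m l)"
proof -
  have f: "finite (insert j (KS m))" by simp
  have "mv \<sigma> m = (\<Prod>l\<in>insert j (KS m). \<sigma> l ^ LK m l)"
    by (rule mv_superset[OF f]) auto
  also have "\<dots> = \<sigma> j ^ LK m j * (\<Prod>l\<in>insert j (KS m) - {j}. \<sigma> l ^ LK m l)"
    by (rule prod.remove[OF f]) simp
  also have "insert j (KS m) - {j} = KS m - {j}" by auto
  finally show ?thesis .
qed

lemma lk_le_tdeg: "LK m i \<le> tdeg m"
proof (cases "i \<in> KS m")
  case True
  then show ?thesis unfolding tdeg_def
    by (metis finite_keys member_le_sum zero_le)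
next
  case False
  then show ?thesis by (simp add: in_keys_iff)
qed

lemma tdeg_remove: "(\<Sum>l\<in>KS m - {i}. LK m l) = tdeg m - LK m i"
proof (cases "i \<in> KS m")
  case True
  then show ?thesis unfolding tdeg_def by (simp add: sum.remove)
next
  case False
  then show ?thesis unfolding tdeg_def by (simp add: in_keys_iff)
qed

lemma deg_le_rest: "deg_le (tdeg m - LK m i) (\<Prod>l\<in>KS m - {i}. Var l ^ LK m l)"
proof -
  have "deg_le (\<Sum>l\<in>KS m - {i}. LK m l) (\<Prod>l\<in>KS m - {i}. Var l ^ LK m l)"
    by (rule deg_le_prod_sum) (metis deg_le_Var deg_le_power le_refl mult.right_neutral)
  then show ?thesis by (simp add: tdeg_remove)
qed

lemma factor:
  assumes dp: "deg_le N p" and dq: "deg_le 1 q" and pv: "polys_on V p" and qv: "polys_on V q"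
    and iV: "i \<in> V"
  shows "\<exists>D. p = eval_subst (Var(i:=q)) p + (Var i + q) * D \<and> deg_le (N - 1) D
             \<and> (N = 0 \<longrightarrow> D = 0) \<and> polys_on V D"
proof -
  define G where "G k = (\<Sum>j<k. q ^ (k - Suc j) * Var i ^ j)" for k
  have Gk: "Var i ^ k + q ^ k = (Var i + q) * G k" for k
    using power_diff_sumr2[of "Var i" k q] by (simp add: G_def)
  define R where "R m = (\<Prod>l\<in>KS m - {i}. Var l ^ LK m l)" for m
  define D where "D = (\<Sum>m\<in>KS p. Const (LK p m) * G (LK m i) * R m)"
  let ?\<sigma> = "Var(i:=q)"
  have mvs: "mv ?\<sigma> m = q ^ LK m i * R m" for m
    unfolding mv_split[of _ m i] R_def by (auto intro!: prod.cong)
  have mvv: "mv Var m = Var i ^ LK m i * R m" for m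
    unfolding mv_split[of _ m i] R_def by simp
  have p_exp: "p = (\<Sum>m\<in>KS p. Const (LK p m) * mv Var m)"
    using poly_expand[of p] single_as_mv by simp
  have e_exp: "eval_subst ?\<sigma> p = (\<Sum>m\<in>KS p. Const (LK p m) * mv ?\<sigma> m)"
    by (simp add: eval_subst_def mv_def)
  have "p + eval_subst ?\<sigma> p = (\<Sum>m\<in>KS p. Const (LK p m) * (Var i ^ LK m i + q ^ LK m i) * R m)"
    by (subst p_exp, subst e_exp) (simp add: mvs mvv sum.distrib[symmetric] algebra_simps)
  also have "\<dots> = (Var i + q) * D"
    by (simp add: D_def Gk sum_distrib_left mult_ac)
  finally have eq: "p + eval_subst ?\<sigma> p = (Var i + q) * D" .
  have eq2: "p = eval_subst ?\<sigma> p + (Var i + q) * D"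
    by (simp add: eq[symmetric] add.assoc[symmetric])
  have Gdeg: "deg_le (k - 1) (G k)" for k
    unfolding G_def
  proof (rule deg_le_sum)
    fix j assume "j \<in> {..<k}"
    then have "k - Suc j + j = k - 1" by auto
    moreover have "deg_le ((k - Suc j) * 1 + j * 1) (q ^ (k - Suc j) * Var i ^ j)"
      by (intro deg_le_mult deg_le_power dq deg_le_Var) simp
    ultimately show "deg_le (k - 1) (q ^ (k - Suc j) * Var i ^ j)" by simp
  qed
  have G0: "G 0 = 0" by (simp add: G_def)
  have Ddeg: "deg_le (N - 1) D"
    unfolding D_def
  proof (rule deg_le_sum)
    fix m assume m: "m \<in> KS p"
    show "deg_le (N - 1) (Const (LK p m) * G (LK m i) * R m)"
    proof (cases "LK m i = 0")
      case True then show ?thesis by (simp add: G0)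
    next
      case False
      have "deg_le (0 + (LK m i - 1) + (tdeg m - LK m i)) (Const (LK p m) * G (LK m i) * R m)"
        by (intro deg_le_mult Gdeg) (auto simp: R_def deg_le_rest)
      moreover have "tdeg m \<le> N" using dp m by (auto simp: deg_le_def)
      moreover have "LK m i \<le> tdeg m" by (rule lk_le_tdeg)
      ultimately show ?thesis using False by (auto elim!: deg_le_mono)
    qed
  qed
  have D0: "N = 0 \<longrightarrow> D = 0"
  proof
    assume N0: "N = 0"
    have "LK m i = 0" if "m \<in> KS p" for m
      using that dp N0 lk_le_tdeg[of m i] by (auto simp: deg_le_def)
    then show "D = 0" unfolding D_def by (simp add: G0)
  qed
  have DV: "polys_on V D"
    unfolding D_def G_def R_def
  proof (intro polys_on_sum polys_on_mult polys_on_prod polys_on_power)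
    fix m l assume "m \<in> KS p" "l \<in> KS m - {i}"
    then have "l \<in> V" using pv by (auto simp: polys_on_def)
    then show "polys_on V (Var l)" by simp
  qed (use qv iV in auto)
  show ?thesis using eq2 Ddeg D0 DV by blast
qed

lemma factor_vanish:
  assumes "eval_subst (Var(i:=q)) p = 0"
    and "deg_le N p" "deg_le 1 q" "polys_on V p" "polys_on V q" "i \<in> V"
  shows "\<exists>D. p = (Var i + q) * D \<and> deg_le (N - 1) D \<and> (N = 0 \<longrightarrow> D = 0) \<and> polys_on V D"
  using factor[OF assms(2-)] assms(1) by simp

lemma factor_any:
  assumes "polys_on V p" "polys_on V q" "deg_le 1 q" "i \<in> V"
  shows "\<exists>D. p = eval_subst (Var(i:=q)) p + (Var i + q) * D \<and> polys_on V D"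
  using factor[of _ p q V i] deg_le_exists[of p] assms by blast

lemma of_nat_bit: "(of_nat n :: bit) = (if even n then 0 else 1)"
proof (induction n)
  case (Suc n)
  have "(1::bit) + 1 = 0" by (simp add: add_bit_eq_xor)
  with Suc show ?case by auto
qed simp

lemma binom_aux: fixes x y z c B :: "'a::idom"
  shows "(x + y) * (z * x + c * z * y + y^2 * B) =
         z * x * x + (c + 1) * (z * x) * y + y^2 * (x * B + c * z + y * B)"
  by algebra

lemma binom_taylor: "\<exists>B. ((x::mpoly) + y) ^ k = x ^ k + of_nat k * x ^ (k - 1) * y + y^2 * B"
proof (induction k)
  case 0
  show ?case by (rule exI[of _ 0]) simp
next
  case (Suc k)
  then obtain B where B: "(x + y) ^ k = x ^ k + of_nat k * x ^ (k - 1) * y + y^2 * B" by blast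
  show ?case
  proof (cases k)
    case 0
    then show ?thesis by (intro exI[of _ 0]) simp
  next
    case (Suc k')
    have "(x + y) ^ Suc k = (x + y) * (x ^ k' * x + of_nat k * x ^ k' * y + y^2 * B)"
      using B Suc by (simp add: mult.commute)
    also have "\<dots> = x ^ k' * x * x + (of_nat k + 1) * (x ^ k' * x) * y
                   + y^2 * (x * B + of_nat k * x ^ k' + y * B)"
      by (rule binom_aux)
    also have "\<dots> = x ^ Suc k + of_nat (Suc k) * x ^ (Suc k - 1) * y
                   + y^2 * (x * B + of_nat k * x ^ k' + y * B)"
      using Suc by (simp add: mult.commute mult.left_commute add.commute)
    finally show ?thesis by blast
  qed
qed

lemma keys_sum_obtain: "n \<in> KS (sum f A) \<Longrightarrow> \<exists>a\<in>A. n \<in> KS (f a)"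
  using keys_sum[of f A] by blast

definition Dj :: "nat \<Rightarrow> mpoly \<Rightarrow> mpoly" where
  "Dj j p = (\<Sum>m\<in>KS p. SG (m - SG j 1) (LK p m * of_nat (LK m j)))"

lemma lookup_minus_single [simp]: "LK (m - SG j 1) l = LK m l - (if l = j then 1 else 0)"
  by (simp add: lookup_minus lookup_single)

lemma lookup_minus_single' [simp]: "LK (m - SG j (Suc 0)) l = LK m l - (if l = j then Suc 0 else 0)"
  by (simp add: lookup_minus lookup_single)

lemma mv_Var_minus:
  assumes "LK m j \<noteq> 0"
  shows "Var j ^ (LK m j - 1) * (\<Prod>l\<in>KS m - {j}. Var l ^ LK m l) = SG (m - SG j 1) 1"
proof -
  let ?m' = "m - SG j 1"
  have k1: "KS ?m' - {j} = KS m - {j}"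
  proof (rule set_eqI)
    fix x show "x \<in> KS ?m' - {j} \<longleftrightarrow> x \<in> KS m - {j}"
      using lookup_minus_single[of m j x] by (auto simp: in_keys_iff)
  qed
  have "SG ?m' 1 = mv Var ?m'" by (simp add: mv_Var)
  also have "\<dots> = Var j ^ LK ?m' j * (\<Prod>l\<in>KS ?m' - {j}. Var l ^ LK ?m' l)"
    by (rule mv_split)
  also have "\<dots> = Var j ^ (LK m j - 1) * (\<Prod>l\<in>KS m - {j}. Var l ^ LK m l)"
    unfolding k1 by (auto simp: lookup_minus_single intro!: prod.cong)
  finally show ?thesis by simp
qed

lemma taylor:
  assumes "j \<noteq> r"
  shows "\<exists>R. eval_subst (Var(j := Var j + Var r)) p = p + Var r * Dj j p + Var r ^ 2 * R"
proof -
  let ?\<tau> = "Var(j := Var j + Var r)"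
  obtain B where B: "\<And>k. (Var j + Var r) ^ k = Var j ^ k + of_nat k * Var j ^ (k - 1) * Var r + (Var r)^2 * B k"
    using binom_taylor[of "Var j" "Var r"] by metis
  define R where "R m = (\<Prod>l\<in>KS m - {j}. Var l ^ LK m l)" for m
  have mvt: "mv ?\<tau> m = (Var j + Var r) ^ LK m j * R m" for m
    unfolding mv_split[of _ m j] R_def by (auto intro!: prod.cong)
  have mvv: "SG m 1 = Var j ^ LK m j * R m" for m
    using mv_split[of Var m j] by (simp add: mv_Var R_def)
  have dterm: "Const c * (of_nat (LK m j) * Var j ^ (LK m j - 1)) * R m = SG (m - SG j 1) (c * of_nat (LK m j))" for c m
  proof (cases "LK m j = 0")
    case True then show ?thesis by simp
  next
    case False
    have "Const c * (of_nat (LK m j) * Var j ^ (LK m j - 1)) * R m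
          = Const c * of_nat (LK m j) * (Var j ^ (LK m j - 1) * R m)" by (simp add: mult_ac)
    also have "\<dots> = Const c * of_nat (LK m j) * SG (m - SG j 1) 1"
      using mv_Var_minus[OF False] by (simp add: R_def)
    also have "\<dots> = SG (m - SG j 1) (c * of_nat (LK m j))"
      by (simp add: Const_def mult_single flip: single_of_nat)
    finally show ?thesis .
  qed
  have mono: "eval_subst ?\<tau> (SG m c) = SG m c + Var r * SG (m - SG j 1) (c * of_nat (LK m j))
               + Var r ^ 2 * (Const c * B (LK m j) * R m)" for m c
  proof -
    have "eval_subst ?\<tau> (SG m c) = Const c * ((Var j + Var r) ^ LK m j * R m)"
      by (simp add: eval_single mvt)
    also have "\<dots> = Const c * (Var j ^ LK m j * R m) + Var r * (Const c * (of_nat (LK m j) * Var j ^ (LK m j - 1)) * R m)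
               + Var r ^ 2 * (Const c * B (LK m j) * R m)"
      unfolding B by (simp add: algebra_simps)
    also have "\<dots> = SG m c + Var r * SG (m - SG j 1) (c * of_nat (LK m j))
               + Var r ^ 2 * (Const c * B (LK m j) * R m)"
      unfolding dterm mvv[symmetric] Const_single by simp
    finally show ?thesis .
  qed
  have pe: "(\<Sum>m\<in>KS p. SG m (LK p m)) = p" by (rule poly_expand[symmetric])
  have "eval_subst ?\<tau> p = eval_subst ?\<tau> (\<Sum>m\<in>KS p. SG m (LK p m))"
    by (simp only: pe)
  also have "\<dots> = (\<Sum>m\<in>KS p. eval_subst ?\<tau> (SG m (LK p m)))"
    by (rule eval_sum)
  also have "\<dots> = (\<Sum>m\<in>KS p. SG m (LK p m)) + Var r * Dj j p
                 + Var r ^ 2 * (\<Sum>m\<in>KS p. Const (LK p m) * B (LK m j) * R m)"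
    by (simp add: mono sum.distrib sum_distrib_left Dj_def)
  also have "\<dots> = p + Var r * Dj j p
                 + Var r ^ 2 * (\<Sum>m\<in>KS p. Const (LK p m) * B (LK m j) * R m)"
    by (simp only: pe)
  finally show ?thesis by blast
qed

lemma Dj_zero_even:
  assumes "Dj j p = 0" "m \<in> KS p"
  shows "even (LK m j)"
proof (rule ccontr)
  assume odd: "odd (LK m j)"
  then have m1: "LK m j \<noteq> 0" by (metis dvd_0_right)
  have inj: "m' = m" if "m' \<in> KS p" "LK m' j \<noteq> 0" "m' - SG j 1 = m - SG j 1" for m'
  proof (rule poly_mapping_eqI)
    fix l
    have "LK (m' - SG j 1) l = LK (m - SG j 1) l" using that(3) by simp
    then show "LK m' l = LK m l"
      using that(2) m1 by (auto simp: lookup_minus_single split: if_splits)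
  qed
  let ?f = "\<lambda>m'. LK (SG (m' - SG j 1) (LK p m' * of_nat (LK m' j))) (m - SG j 1)"
  have "LK (Dj j p) (m - SG j 1) = (\<Sum>m'\<in>KS p. ?f m')"
    by (simp add: Dj_def lookup_sum)
  also have "\<dots> = ?f m + (\<Sum>m'\<in>KS p - {m}. ?f m')"
    using assms(2) by (simp add: sum.remove)
  also have "(\<Sum>m'\<in>KS p - {m}. ?f m') = 0"
  proof (rule sum.neutral, rule ballI)
    fix m' assume m': "m' \<in> KS p - {m}"
    show "?f m' = 0"
    proof (cases "LK m' j = 0")
      case True then show ?thesis by simp
    next
      case False
      then have "m' - SG j 1 \<noteq> m - SG j 1" using inj m' by blast
      then show ?thesis by (simp add: lookup_single)
    qed
  qed
  also have "?f m = 1"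
    using assms(2) odd by (simp add: of_nat_bit in_keys_iff bit_not_zero_iff)
  finally have "LK (Dj j p) (m - SG j 1) = 1" by simp
  with assms(1) show False by simp
qed

lemma polys_on_Dj:
  assumes "polys_on V p"
  shows "polys_on V (Dj j p)"
  unfolding polys_on_def
proof
  fix n assume "n \<in> KS (Dj j p)"
  then obtain m where m: "m \<in> KS p" "n \<in> KS (SG (m - SG j 1) (LK p m * of_nat (LK m j)))"
    unfolding Dj_def by (meson keys_sum_obtain)
  then have n: "n = m - SG j 1" by (auto split: if_splits)
  have "KS n \<subseteq> KS m" unfolding n by (auto simp: in_keys_iff lookup_minus_single)
  then show "KS n \<subseteq> V" using assms m unfolding polys_on_def by blast
qed

definition halfm :: "mono \<Rightarrow> mono" where
  "halfm m = Poly_Mapping.map (\<lambda>k. k div 2) m"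

lemma lookup_halfm: "LK (halfm m) l = LK m l div 2"
  by (simp add: halfm_def Poly_Mapping.map.rep_eq when_def)

lemma halfm_double:
  assumes "\<And>l. even (LK m l)"
  shows "halfm m + halfm m = m"
proof (rule poly_mapping_eqI)
  fix k
  from assms[of k] obtain t where "LK m k = 2 * t" by (elim evenE)
  then show "LK (halfm m + halfm m) k = LK m k" by (simp add: lookup_add lookup_halfm)
qed

definition sqrtp :: "mpoly \<Rightarrow> mpoly" where
  "sqrtp p = (\<Sum>m\<in>KS p. SG (halfm m) (LK p m))"

lemma sq_sum_mpoly: "(sum f A)^2 = (\<Sum>a\<in>A. (f a :: mpoly)^2)"
  by (induction A rule: infinite_finite_induct) (auto simp: sq_add_mpoly)

lemma sqrtp_sq:
  assumes "\<And>m l. m \<in> KS p \<Longrightarrow> even (LK m l)"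
  shows "sqrtp p ^ 2 = p"
proof -
  have "SG (halfm m) c ^ 2 = SG m c" if "m \<in> KS p" for m and c :: bit
  proof -
    have "halfm m + halfm m = m"
      by (rule halfm_double) (rule assms[OF that])
    then show ?thesis using bit_sq[of c] by (simp add: power2_eq_square mult_single)
  qed
  then have "sqrtp p ^ 2 = (\<Sum>m\<in>KS p. SG m (LK p m))"
    unfolding sqrtp_def sq_sum_mpoly by simp
  then show ?thesis using poly_expand[of p, symmetric] by simp
qed

lemma polys_on_sqrtp:
  assumes "polys_on V p"
  shows "polys_on V (sqrtp p)"
  unfolding sqrtp_def polys_on_def
proof
  fix n assume "n \<in> KS (\<Sum>m\<in>KS p. SG (halfm m) (LK p m))"
  then obtain m where m: "m \<in> KS p" "n \<in> KS (SG (halfm m) (LK p m))"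
    by (meson keys_sum_obtain)
  then have n: "n = halfm m" by (auto split: if_splits)
  have "KS n \<subseteq> KS m" unfolding n by (auto simp: in_keys_iff lookup_halfm)
  then show "KS n \<subseteq> V" using assms m unfolding polys_on_def by blast
qed

lemma deg_le_sqrtp:
  assumes "deg_le N p" "\<And>m l. m \<in> KS p \<Longrightarrow> even (LK m l)"
  shows "deg_le (N div 2) (sqrtp p)"
  unfolding sqrtp_def deg_le_def
proof
  fix n assume "n \<in> KS (\<Sum>m\<in>KS p. SG (halfm m) (LK p m))"
  then obtain m where m: "m \<in> KS p" "n \<in> KS (SG (halfm m) (LK p m))"
    by (meson keys_sum_obtain)
  then have n: "n = halfm m" by (auto split: if_splits)
  have "halfm m + halfm m = m"
    by (rule halfm_double) (rule assms(2)[OF m(1)])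
  then have "tdeg n + tdeg n = tdeg m" unfolding n by (metis tdeg_add)
  moreover have "tdeg m \<le> N" using assms(1) m unfolding deg_le_def by blast
  ultimately show "tdeg n \<le> N div 2" by linarith
qed

section \<open>The square lemma\<close>

lemma swap_eq_mpoly: "(a::mpoly) + b = c + d \<Longrightarrow> a + c = b + d"
proof -
  assume H: "a + b = c + d"
  have "a + c = (a + b) + (b + c)" by (simp add: add_ac)
  also have "\<dots> = (c + d) + (b + c)" by (simp add: H)
  also have "\<dots> = b + d" by (simp add: add_ac)
  finally show ?thesis .
qed

lemma Var_nz [simp]: "Var i \<noteq> 0"
proof
  assume "Var i = 0"
  then have "LK (Var i) (SG i 1) = LK 0 (SG i 1)" by simp
  then show False by (simp add: Var_def)
qed

lemma no_var_restrict:
  assumes "polys_on V p" "r \<notin> V"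
  shows "eval_subst (Var(r:=0)) p = p"
  by (rule eval_id_on[OF assms(1)]) (use assms(2) in auto)

lemma square_lemma:
  assumes rJ: "r \<notin> J" and fJ: "polys_on (insert r J) f"
    and inv: "\<And>j. j \<in> J \<Longrightarrow> eval_subst (Var(j := Var j + Var r)) f = f"
  shows "polys_on J (eval_subst (Var(r:=0)) f)"
    and "\<And>m l. m \<in> KS (eval_subst (Var(r:=0)) f) \<Longrightarrow> even (LK m l)"
proof -
  define p0 where "p0 = eval_subst (Var(r:=0)) f"
  show pJ: "polys_on J (eval_subst (Var(r:=0)) f)"
    by (rule polys_on_eval[OF fJ]) auto
  then have p0J: "polys_on J p0" by (simp add: p0_def)
  obtain f1 where f1: "f = p0 + (Var r + 0) * f1" "polys_on (insert r J) f1"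
    using factor_any[OF fJ, of 0 r] by (auto simp: p0_def)
  have evenj: "even (LK m j)" if m: "m \<in> KS p0" and j: "j \<in> J" for m j
  proof -
    let ?\<tau> = "Var(j := Var j + Var r)"
    have jr: "j \<noteq> r" using j rJ by auto
    have comp: "eval_subst (Var(r:=0)) (eval_subst ?\<tau> g) = eval_subst (Var(r:=0)) g" for g
      by (subst eval_comp) (rule arg_cong[where f="\<lambda>\<sigma>. eval_subst \<sigma> g"], auto simp: fun_eq_iff jr eval_add)
    have "eval_subst (Var(r:=0)) (f1 + eval_subst ?\<tau> f1) = 0"
      by (simp add: eval_add comp)
    moreover have "polys_on (insert r J) (f1 + eval_subst ?\<tau> f1)"
      using f1(2) j by (intro polys_on_add polys_on_eval) auto
    ultimately obtain W where W: "f1 + eval_subst ?\<tau> f1 = (Var r + 0) * W"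
      using factor_any[of "insert r J" "f1 + eval_subst ?\<tau> f1" 0 r] by auto
    have "eval_subst ?\<tau> f = eval_subst ?\<tau> p0 + Var r * eval_subst ?\<tau> f1"
      by (subst f1(1)) (simp add: eval_add eval_mult jr[symmetric])
    then have "eval_subst ?\<tau> p0 + Var r * eval_subst ?\<tau> f1 = p0 + Var r * f1"
      using inv[OF j] f1(1) by simp
    then have "eval_subst ?\<tau> p0 + p0 = Var r * (f1 + eval_subst ?\<tau> f1)"
      by (rule swap_eq_mpoly[THEN trans]) (simp add: distrib_left add_ac)
    also have "\<dots> = Var r ^ 2 * W" using W by (simp add: power2_eq_square)
    finally have e1: "eval_subst ?\<tau> p0 + p0 = Var r ^ 2 * W" .
    obtain R where R: "eval_subst ?\<tau> p0 = p0 + Var r * Dj j p0 + Var r ^ 2 * R"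
      using taylor[OF jr] by blast
    have e2: "Var r * Dj j p0 + Var r ^ 2 * R = Var r ^ 2 * W"
      using e1 unfolding R by (simp add: add_ac)
    have "Var r * (Dj j p0 + Var r * (R + W)) = (Var r * Dj j p0 + Var r ^ 2 * R) + Var r ^ 2 * W"
      by algebra
    also have "\<dots> = 0" unfolding e2 by simp
    finally have "Var r * (Dj j p0 + Var r * (R + W)) = 0" .
    moreover have "Var r \<noteq> 0" by simp
    ultimately have "Dj j p0 + Var r * (R + W) = 0" by simp
    then have "Dj j p0 = Var r * (R + W)"
      by (subst add_eq_iff_mpoly[of "Dj j p0" "Var r * (R + W)"])
    then have "eval_subst (Var(r:=0)) (Dj j p0) = 0"
      by (simp add: eval_mult)
    moreover have "eval_subst (Var(r:=0)) (Dj j p0) = Dj j p0"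
      by (rule no_var_restrict[OF polys_on_Dj[OF p0J] rJ])
    ultimately have "Dj j p0 = 0" by simp
    then show ?thesis using Dj_zero_even m by blast
  qed
  fix m l assume m: "m \<in> KS (eval_subst (Var(r:=0)) f)"
  then have m': "m \<in> KS p0" by (simp add: p0_def)
  show "even (LK m l)"
  proof (cases "l \<in> J")
    case True show ?thesis using evenj[OF m' True] .
  next
    case False
    then have "l \<notin> KS m" using p0J m' unfolding polys_on_def by blast
    then show ?thesis by (simp add: in_keys_iff)
  qed
qed

fun es :: "nat \<Rightarrow> 'a::comm_ring_1 list \<Rightarrow> 'a" where
  "es 0 xs = 1"
| "es (Suc k) [] = 0"
| "es (Suc k) (x#xs) = es (Suc k) xs + x * es k xs"

lemma es_eval: "eval_subst \<sigma> (es k xs) = es k (map (eval_subst \<sigma>) xs)"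
  by (induction k xs rule: es.induct) (auto simp: eval_add eval_mult)

lemma es_swap: "es k (x#y#zs) = es k (y#x#zs)"
proof (cases k)
  case (Suc k')
  then show ?thesis by (cases k') (simp_all add: algebra_simps)
qed simp

lemma es_cons_cong: "(\<And>k. es k xs = es k ys) \<Longrightarrow> es k (x#xs) = es k (x#ys)"
  by (cases k) simp_all

lemma es_move: "es k (x # ys1 @ ys2) = es k (ys1 @ x # ys2)"
proof (induction ys1 arbitrary: k)
  case (Cons y ys1)
  have "es k (x # (y # ys1) @ ys2) = es k (y # x # ys1 @ ys2)" by (simp add: es_swap)
  also have "\<dots> = es k (y # ys1 @ x # ys2)" by (rule es_cons_cong) (rule Cons.IH)
  finally show ?case by simp
qed simp

lemma es_perm: "mset xs = mset ys \<Longrightarrow> es k xs = es k ys"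
proof (induction xs arbitrary: ys k)
  case Nil
  then have "ys = []" by simp
  then show ?case by simp
next
  case (Cons x xs)
  then have "x \<in> set ys" by (metis list.set_intros(1) set_mset_mset)
  then obtain ys1 ys2 where ys: "ys = ys1 @ x # ys2" by (meson split_list)
  then have "mset xs = mset (ys1 @ ys2)" using Cons.prems by simp
  then have "\<And>k. es k xs = es k (ys1 @ ys2)" using Cons.IH by blast
  then have "es k (x # xs) = es k (x # ys1 @ ys2)" by (rule es_cons_cong)
  also have "\<dots> = es k ys" unfolding ys by (rule es_move)
  finally show ?case .
qed

lemma es_homogeneous: "(\<And>x. x \<in> set xs \<Longrightarrow> homogeneous 1 x) \<Longrightarrow> homogeneous k (es k xs)"
proof (induction k xs rule: es.induct)
  case (1 xs) then show ?case by (simp add: homogeneous_1)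
next
  case (2 k) then show ?case by simp
next
  case (3 k x xs)
  have "homogeneous (1 + k) (x * es k xs)" using 3 by (intro homogeneous_mult) auto
  then show ?case using 3 by (auto intro: homogeneous_add)
qed

lemma es_polys_on: "(\<And>x. x \<in> set xs \<Longrightarrow> polys_on V x) \<Longrightarrow> polys_on V (es k xs)"
  by (induction k xs rule: es.induct) auto

section \<open>Dickson invariants as elementary symmetric functions\<close>

lemma es4_gen: fixes a b c :: "'a::idom"
  shows "es 4 [a,b,c,a+c,a+b,b+c,a+b+c] = a^4 + b^4 + c^4 + a^2*b^2 + a^2*c^2 + b^2*c^2
         + a^2*b*c + a*b^2*c + a*b*c^2 + 2 * (5 * b * c^3 + 9 * b^2 * c^2 + 5 * b^3 * c + 5 * a * c^3 + 22 * a * b * c^2 + 22 * a * b^2 * c + 5 * a * b^3 + 9 * a^2 * c^2 + 22 * a^2 * b * c + 9 * a^2 * b^2 + 5 * a^3 * c + 5 * a^3 * b)"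
  by (simp add: eval_nat_numeral) algebra

lemma es6_gen: fixes a b c :: "'a::idom"
  shows "es 6 [a,b,c,a+c,a+b,b+c,a+b+c] = a^4*b^2 + a^2*b^4 + a^4*c^2 + a^2*c^4 + b^4*c^2 + b^2*c^4
         + a^4*b*c + a*b^4*c + a*b*c^4 + a^2*b^2*c^2 + 2 * (b^3 * c^3 + a * b * c^4 + 6 * a * b^2 * c^3 + 6 * a * b^3 * c^2 + a * b^4 * c + 6 * a^2 * b * c^3 + 11 * a^2 * b^2 * c^2 + 6 * a^2 * b^3 * c + a^3 * c^3 + 6 * a^3 * b * c^2 + 6 * a^3 * b^2 * c + a^3 * b^3 + a^4 * b * c)"
  by (simp add: eval_nat_numeral) algebra

lemma es7_gen: fixes a b c :: "'a::idom"
  shows "es 7 [a,b,c,a+c,a+b,b+c,a+b+c] = a^4*b^2*c + a^4*b*c^2 + a^2*b^4*c + a*b^4*c^2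
         + a^2*b*c^4 + a*b^2*c^4 + 2 * (a * b^3 * c^3 + 2 * a^2 * b^2 * c^3 + 2 * a^2 * b^3 * c^2 + a^3 * b * c^3 + 2 * a^3 * b^2 * c^2 + a^3 * b^3 * c)"
  by (simp add: eval_nat_numeral) algebra

definition NL :: "mpoly list" where
  "NL = [xa, xb, xc, xa + xc, xa + xb, xb + xc, xa + xb + xc]"

lemma dick2_es: "dick2 = es 4 NL"
  using es4_gen[of xa xb xc] by (simp add: NL_def dick2_def)
lemma dick1_es: "dick1 = es 6 NL"
  using es6_gen[of xa xb xc] by (simp add: NL_def dick1_def)
lemma dick0_es: "dick0 = es 7 NL"
  using es7_gen[of xa xb xc] by (simp add: NL_def dick0_def)

lemma dick0_prod: "dick0 = xa * xb * xc * (xa + xc) * (xa + xb) * (xb + xc) * (xa + xb + xc)"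
  by (simp add: dick0_es NL_def eval_nat_numeral mult_ac)

definition asub :: "nat \<Rightarrow> mat \<Rightarrow> nat \<Rightarrow> mpoly" where
  "asub n M = (\<lambda>i. if i < n then (\<Sum>j<n. Const (M i j) * Var j) else Var i)"

lemma act_asub: "act n M = eval_subst (asub n M)"
  by (simp add: fun_eq_iff act_def asub_def)

definition SA3 :: "nat \<Rightarrow> mpoly" where "SA3 = Var(0 := xa + xc)"
definition SB3 :: "nat \<Rightarrow> mpoly" where "SB3 = Var(0 := xc, 1 := xa, 2 := xb)"
definition SA6 :: "nat \<Rightarrow> mpoly" where
  "SA6 = Var(0 := Var 0 + Var 2 + Var 5, 3 := Var 3 + Var 4)"
definition SB6 :: "nat \<Rightarrow> mpoly" where
  "SB6 = Var(0 := Var 2, 1 := Var 0, 2 := Var 1, 3 := Var 5, 4 := Var 3, 5 := Var 4)"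

lemma less6_cases: "(i::nat) < 6 \<Longrightarrow> i = 0 \<or> i = 1 \<or> i = 2 \<or> i = 3 \<or> i = 4 \<or> i = 5" by auto
lemma less3_cases: "(i::nat) < 3 \<Longrightarrow> i = 0 \<or> i = 1 \<or> i = 2" by auto

lemma asub_A6: "asub 6 DA = SA6"
proof
  fix i show "asub 6 DA i = SA6 i"
  proof (cases "i < 6")
    case True
    then show ?thesis
      by (elim less6_cases[THEN disjE] disjE)
         (simp_all add: asub_def DA_def mat_of_list_def SA6_def eval_nat_numeral add.assoc)
  qed (simp add: asub_def SA6_def)
qed

lemma asub_B6: "asub 6 DB = SB6"
proof
  fix i show "asub 6 DB i = SB6 i"
  proof (cases "i < 6")
    case True
    then show ?thesis
      by (elim less6_cases[THEN disjE] disjE)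
         (simp_all add: asub_def DB_def mat_of_list_def SB6_def eval_nat_numeral add.assoc)
  qed (simp add: asub_def SB6_def)
qed

lemma asub_A3: "asub 3 DA = SA3"
proof
  fix i show "asub 3 DA i = SA3 i"
  proof (cases "i < 3")
    case True
    then show ?thesis
      by (elim less3_cases[THEN disjE] disjE)
         (simp_all add: asub_def DA_def mat_of_list_def SA3_def eval_nat_numeral add.assoc)
  qed (simp add: asub_def SA3_def)
qed

lemma asub_B3: "asub 3 DB = SB3"
proof
  fix i show "asub 3 DB i = SB3 i"
  proof (cases "i < 3")
    case True
    then show ?thesis
      by (elim less3_cases[THEN disjE] disjE)
         (simp_all add: asub_def DB_def mat_of_list_def SB3_def eval_nat_numeral add.assoc)
  qed (simp add: asub_def SB3_def)
qed

lemma DG_lower: "g \<in> DG \<Longrightarrow> 3 \<le> i \<Longrightarrow> i < 6 \<Longrightarrow> j < 3 \<Longrightarrow> g i j = 0"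
proof (induction g arbitrary: i j rule: DG.induct)
  case gen_A
  then have "i = 3 \<or> i = 4 \<or> i = 5" "j = 0 \<or> j = 1 \<or> j = 2" by auto
  then show ?case by (elim disjE) (simp_all add: DA_def mat_of_list_def eval_nat_numeral)
next
  case gen_B
  then have "i = 3 \<or> i = 4 \<or> i = 5" "j = 0 \<or> j = 1 \<or> j = 2" by auto
  then show ?case by (elim disjE) (simp_all add: DB_def mat_of_list_def eval_nat_numeral)
next
  case (mult M N)
  show ?case unfolding matmul_def
  proof (rule sum.neutral, rule ballI)
    fix k assume "k \<in> {..<6::nat}"
    then show "M i k * N k j = 0"
      using mult by (cases "k < 3") auto
  qed
qed

lemma Const_sum: "Const (sum f A) = (\<Sum>a\<in>A. Const (f a))"
  by (induction A rule: infinite_finite_induct) (auto simp: Const_add)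

lemma asub_lt: "i < n \<Longrightarrow> asub n M i = (\<Sum>j<n. Const (M i j) * Var j)"
  by (simp add: asub_def)
lemma asub_ge: "\<not> i < n \<Longrightarrow> asub n M i = Var i"
  by (simp add: asub_def)

lemma act_matmul:
  assumes "\<And>i k. i < n \<Longrightarrow> k < n \<Longrightarrow> matmul 6 M N i k = (\<Sum>j<n. M i j * N j k)"
  shows "act n (matmul 6 M N) p = act n N (act n M p)"
proof -
  have "act n N (act n M p) = eval_subst (\<lambda>i. eval_subst (asub n N) (asub n M i)) p"
    by (simp add: act_asub eval_comp)
  also have "(\<lambda>i. eval_subst (asub n N) (asub n M i)) = asub n (matmul 6 M N)"
  proof
    fix i show "eval_subst (asub n N) (asub n M i) = asub n (matmul 6 M N) i"
    proof (cases "i < n")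
      case True
      have "eval_subst (asub n N) (asub n M i) = (\<Sum>j<n. Const (M i j) * asub n N j)"
        using True by (simp add: asub_lt[of i] eval_sum eval_mult)
      also have "\<dots> = (\<Sum>j<n. Const (M i j) * (\<Sum>k<n. Const (N j k) * Var k))"
        by (rule sum.cong) (simp_all add: asub_lt)
      also have "\<dots> = (\<Sum>j<n. \<Sum>k<n. Const (M i j) * (Const (N j k) * Var k))"
        by (simp only: sum_distrib_left)
      also have "\<dots> = (\<Sum>k<n. \<Sum>j<n. Const (M i j) * (Const (N j k) * Var k))"
        by (rule sum.swap)
      also have "\<dots> = (\<Sum>k<n. (\<Sum>j<n. Const (M i j) * Const (N j k)) * Var k)"
        by (simp only: sum_distrib_right mult.assoc)
      also have "\<dots> = (\<Sum>k<n. Const (matmul 6 M N i k) * Var k)"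
        by (rule sum.cong) (simp_all add: assms True Const_sum Const_mult)
      finally show ?thesis using True by (simp add: asub_lt)
    qed (simp add: asub_ge)
  qed
  finally show ?thesis by (simp add: act_asub)
qed

lemma act_matmul6: "act 6 (matmul 6 M N) p = act 6 N (act 6 M p)"
  by (rule act_matmul) (simp add: matmul_def)

lemma act_matmul3:
  assumes "N \<in> DG"
  shows "act 3 (matmul 6 M N) p = act 3 N (act 3 M p)"
proof (rule act_matmul)
  fix i k :: nat assume "i < 3" "k < 3"
  have "(\<Sum>j<6. M i j * N j k) = (\<Sum>j<3. M i j * N j k)"
    by (rule sum.mono_neutral_right) (use DG_lower[OF assms] \<open>k < 3\<close> in auto)
  then show "matmul 6 M N i k = (\<Sum>j<3. M i j * N j k)" by (simp add: matmul_def)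
qed

lemma Inv3_iff: "p \<in> Inv3 \<longleftrightarrow> p \<in> polys_in 3 \<and> eval_subst SA3 p = p \<and> eval_subst SB3 p = p"
proof
  assume "p \<in> Inv3"
  then show "p \<in> polys_in 3 \<and> eval_subst SA3 p = p \<and> eval_subst SB3 p = p"
    unfolding Inv3_def using DG.gen_A DG.gen_B
    by (auto simp: act_asub asub_A3 asub_B3)
next
  assume H: "p \<in> polys_in 3 \<and> eval_subst SA3 p = p \<and> eval_subst SB3 p = p"
  have "act 3 g p = p" if "g \<in> DG" for g
    using that
  proof (induction g rule: DG.induct)
    case gen_A then show ?case using H by (simp add: act_asub asub_A3)
  next
    case gen_B then show ?case using H by (simp add: act_asub asub_B3)
  next
    case (mult M N) then show ?case by (simp add: act_matmul3)
  qed
  then show "p \<in> Inv3" using H by (simp add: Inv3_def)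
qed

lemma Inv6_iff: "p \<in> Inv6 \<longleftrightarrow> p \<in> polys_in 6 \<and> eval_subst SA6 p = p \<and> eval_subst SB6 p = p"
proof
  assume "p \<in> Inv6"
  then show "p \<in> polys_in 6 \<and> eval_subst SA6 p = p \<and> eval_subst SB6 p = p"
    unfolding Inv6_def using DG.gen_A DG.gen_B
    by (auto simp: act_asub asub_A6 asub_B6)
next
  assume H: "p \<in> polys_in 6 \<and> eval_subst SA6 p = p \<and> eval_subst SB6 p = p"
  have "act 6 g p = p" if "g \<in> DG" for g
    using that
  proof (induction g rule: DG.induct)
    case gen_A then show ?case using H by (simp add: act_asub asub_A6)
  next
    case gen_B then show ?case using H by (simp add: act_asub asub_B6)
  next
    case (mult M N) then show ?case by (simp add: act_matmul6)
  qed
  then show "p \<in> Inv6" using H by (simp add: Inv6_def)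
qed

definition rsub :: "nat \<Rightarrow> mpoly" where "rsub = (\<lambda>i. if i < 3 then Var i else 0)"

lemma rho_eval: "rho = eval_subst rsub"
  by (simp add: fun_eq_iff rho_def rsub_def)

lemma sum6_split: "(\<Sum>j<6. f j) = (\<Sum>j<3. f j) + (\<Sum>j\<in>{3..<6::nat}. (f j :: mpoly))"
proof -
  have "{..<6::nat} = {..<3} \<union> {3..<6}" by auto
  moreover have "sum f ({..<3} \<union> {3..<6}) = sum f {..<3} + sum f {3..<6::nat}"
    by (rule sum.union_disjoint) auto
  ultimately show ?thesis by simp
qed

lemma rho_act:
  assumes g: "g \<in> DG" and p: "p \<in> polys_in 6"
  shows "rho (act 6 g p) = act 3 g (rho p)"
proof -
  have "rho (act 6 g p) = eval_subst (\<lambda>i. eval_subst rsub (asub 6 g i)) p"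
    by (simp add: rho_eval act_asub eval_comp)
  also have "\<dots> = eval_subst (\<lambda>i. eval_subst (asub 3 g) (rsub i)) p"
  proof (rule eval_cong_on[of "{..<6}"])
    show "polys_on {..<6} p" using p by (simp add: polys_in_on)
  next
    fix i assume i: "i \<in> {..<6::nat}"
    have low: "(\<Sum>j\<in>{3..<6}. Const (g i j) * rsub j) = 0"
      by (rule sum.neutral) (auto simp: rsub_def)
    have s1: "eval_subst rsub (asub 6 g i) = (\<Sum>j<6. Const (g i j) * rsub j)"
      using i by (simp add: asub_lt eval_sum eval_mult)
    have s2: "(\<Sum>j<6. Const (g i j) * rsub j) = (\<Sum>j<3. Const (g i j) * rsub j)"
      by (simp only: sum6_split low) simp
    have s3: "(\<Sum>j<3. Const (g i j) * rsub j) = (\<Sum>j<3. Const (g i j) * Var j)"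
      by (rule sum.cong) (auto simp: rsub_def)
    show "eval_subst rsub (asub 6 g i) = eval_subst (asub 3 g) (rsub i)"
    proof (cases "i < 3")
      case True
      then show ?thesis unfolding s1 s2 s3 by (simp add: rsub_def asub_lt)
    next
      case False
      have "(\<Sum>j<3. Const (g i j) * Var j) = 0"
        by (rule sum.neutral) (use DG_lower[OF g] False i in auto)
      then show ?thesis unfolding s1 s2 s3 using False by (simp add: rsub_def)
    qed
  qed
  also have "\<dots> = act 3 g (rho p)"
    by (simp add: rho_eval act_asub eval_comp)
  finally show ?thesis .
qed

definition cmp :: "(nat \<Rightarrow> mpoly) \<Rightarrow> (nat \<Rightarrow> mpoly) \<Rightarrow> nat \<Rightarrow> mpoly" where
  "cmp S1 S2 = (\<lambda>i. eval_subst S2 (S1 i))"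

lemma eval_cmp: "eval_subst (cmp S1 S2) f = eval_subst S2 (eval_subst S1 f)"
  by (simp add: cmp_def eval_comp)

lemma inv_cmp: "eval_subst S1 f = f \<Longrightarrow> eval_subst S2 f = f \<Longrightarrow> eval_subst (cmp S1 S2) f = f"
  by (simp add: eval_cmp)

lemma inv_agree: "eval_subst S f = f \<Longrightarrow> polys_on V f \<Longrightarrow> (\<And>i. i \<in> V \<Longrightarrow> T i = S i) \<Longrightarrow> eval_subst T f = f"
  using eval_cong_on[of V f T S] by simp

lemmas lin_simps = cmp_def SA3_def SB3_def eval_add eval_Var fun_upd_apply add_ac add_self_mpoly add_self_mpoly2

lemma inv3_words:
  assumes A: "eval_subst SA3 f = f" and B: "eval_subst SB3 f = f" and P: "polys_on {..<3} f"
  shows "eval_subst (Var(1 := xb + xc)) f = f"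
    and "eval_subst (Var(0 := xb, 1 := xa)) f = f"
    and "eval_subst (Var(0 := xa + xb)) f = f"
    and "eval_subst (Var(1 := xc, 2 := xb)) f = f"
    and "eval_subst (Var(0 := xc, 2 := xa)) f = f"
    and "eval_subst (Var(1 := xc, 2 := xa + xb)) f = f"
    and "eval_subst (Var(2 := xa + xc)) f = f"
    and "eval_subst (Var(2 := xb + xc)) f = f"
    and "eval_subst (Var(2 := xa + xb + xc)) f = f"
proof -
  have w: "eval_subst (cmp S SA3) f = f" "eval_subst (cmp S SB3) f = f" if "eval_subst S f = f" for S
    using that A B by (simp_all add: inv_cmp)
  show "eval_subst (Var(1 := xb + xc)) f = f"
    by (rule inv_agree[OF _ P, of "cmp (cmp (cmp (cmp (cmp (cmp (cmp (cmp (cmp (SA3) SB3) SA3) SB3) SB3) SA3) SB3) SA3) SB3) SB3"])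
       (simp add: A B w, auto dest!: less3_cases simp: lin_simps)
  show "eval_subst (Var(0 := xb, 1 := xa)) f = f"
    by (rule inv_agree[OF _ P, of "cmp (cmp (cmp (cmp (cmp (cmp (cmp (cmp (cmp (cmp (cmp (cmp (SA3) SB3) SA3) SB3) SA3) SB3) SB3) SA3) SB3) SA3) SB3) SA3) SB3"])
       (simp add: A B w, auto dest!: less3_cases simp: lin_simps)
  show "eval_subst (Var(0 := xa + xb)) f = f"
    by (rule inv_agree[OF _ P, of "cmp (cmp (cmp (cmp (cmp (cmp (cmp (cmp (cmp (SA3) SB3) SB3) SA3) SB3) SA3) SB3) SB3) SA3) SB3"])
       (simp add: A B w, auto dest!: less3_cases simp: lin_simps)
  show "eval_subst (Var(1 := xc, 2 := xb)) f = f"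
    by (rule inv_agree[OF _ P, of "cmp (cmp (cmp (cmp (cmp (cmp (cmp (cmp (cmp (cmp (cmp (cmp (SB3) SA3) SB3) SA3) SB3) SA3) SB3) SB3) SA3) SB3) SA3) SB3) SA3"])
       (simp add: A B w, auto dest!: less3_cases simp: lin_simps)
  show "eval_subst (Var(0 := xc, 2 := xa)) f = f"
    by (rule inv_agree[OF _ P, of "cmp (cmp (cmp (cmp (cmp (cmp (cmp (cmp (cmp (cmp (cmp (SA3) SB3) SA3) SB3) SA3) SB3) SB3) SA3) SB3) SA3) SB3) SA3"])
       (simp add: A B w, auto dest!: less3_cases simp: lin_simps)
  show "eval_subst (Var(1 := xc, 2 := xa + xb)) f = f"
    by (rule inv_agree[OF _ P, of "cmp (cmp (cmp (cmp (cmp (cmp (cmp (cmp (cmp (SA3) SB3) SA3) SB3) SA3) SB3) SB3) SA3) SB3) SA3"])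
       (simp add: A B w, auto dest!: less3_cases simp: lin_simps)
  show "eval_subst (Var(2 := xa + xc)) f = f"
    by (rule inv_agree[OF _ P, of "cmp (cmp (cmp (cmp (cmp (cmp (cmp (cmp (cmp (SB3) SA3) SB3) SA3) SB3) SB3) SA3) SB3) SA3) SB3"])
       (simp add: A B w, auto dest!: less3_cases simp: lin_simps)
  show "eval_subst (Var(2 := xb + xc)) f = f"
    by (rule inv_agree[OF _ P, of "cmp (cmp (cmp (SB3) SB3) SA3) SB3"])
       (simp add: A B w, auto dest!: less3_cases simp: lin_simps)
  show "eval_subst (Var(2 := xa + xb + xc)) f = f"
    by (rule inv_agree[OF _ P, of "cmp (cmp (cmp (cmp (cmp (cmp (cmp (cmp (SB3) SA3) SB3) SA3) SB3) SB3) SA3) SB3) SB3"])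
       (simp add: A B w, auto dest!: less3_cases simp: lin_simps)
qed

lemma dick_inv:
  shows "eval_subst SA3 (es k NL) = es k NL" and "eval_subst SB3 (es k NL) = es k NL"
  by (rule trans[OF es_eval es_perm], simp add: NL_def lin_simps add_mset_commute)+

definition d1 :: mpoly where "d1 = es 2 [xa, xb, xa + xb]"
definition d0 :: mpoly where "d0 = es 3 [xa, xb, xa + xb]"
definition SS2 :: "nat \<Rightarrow> mpoly" where "SS2 = Var(0 := xb, 1 := xa)"
definition TT2 :: "nat \<Rightarrow> mpoly" where "TT2 = Var(0 := xa + xb)"

lemmas lin_simps2 = SS2_def TT2_def eval_add eval_Var fun_upd_apply add_ac add_self_mpoly add_self_mpoly2

lemma d_inv:
  shows "eval_subst SS2 (es k [xa, xb, xa + xb]) = es k [xa, xb, xa + xb]"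
    and "eval_subst TT2 (es k [xa, xb, xa + xb]) = es k [xa, xb, xa + xb]"
  by (rule trans[OF es_eval es_perm], simp add: lin_simps2 add_mset_commute)+

lemma d1_inv: "eval_subst SS2 d1 = d1" "eval_subst TT2 d1 = d1"
  unfolding d1_def by (rule d_inv)+
lemma d0_inv: "eval_subst SS2 d0 = d0" "eval_subst TT2 d0 = d0"
  unfolding d0_def by (rule d_inv)+

lemma Var_inj: "Var i = Var j \<Longrightarrow> i = j"
  unfolding Var_def by (metis inj_single injD lookup_single_eq one_neq_zero lookup_single_not_eq)

lemma Var_add_nz: "i \<noteq> j \<Longrightarrow> Var i + Var j \<noteq> 0"
  using Var_inj add_eq_iff_mpoly by blast

lemma d0_prod: "d0 = xa * xb * (xa + xb)"
  by (simp add: d0_def eval_nat_numeral mult_ac)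

lemma d0_nz: "d0 \<noteq> 0"
  unfolding d0_prod using Var_add_nz[of 0 1] by simp

lemma es_deg: "(\<And>x. x \<in> set xs \<Longrightarrow> deg_le 1 x) \<Longrightarrow> deg_le k (es k xs)"
proof (induction k xs rule: es.induct)
  case (3 k x xs)
  have "deg_le (1 + k) (x * es k xs)" using 3 by (intro deg_le_mult) auto
  then show ?case using 3 by auto
qed auto

lemma deg_le_lin: "deg_le 1 (Var i)" "deg_le 1 (Var i + Var j)" "deg_le 1 (Var i + Var j + Var k)"
  by (auto intro!: deg_le_add deg_le_Var)

lemma d1_props: "deg_le 2 d1" "polys_on {0,1} d1"
  unfolding d1_def by (rule es_deg es_polys_on, auto intro!: deg_le_add deg_le_Var)+
lemma d0_props: "deg_le 3 d0" "polys_on {0,1} d0"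
  unfolding d0_def by (rule es_deg es_polys_on, auto intro!: deg_le_add deg_le_Var)+

lemma es2sq: fixes a b :: "'a::idom"
  shows "(es 2 [a, b, a + b])^2 = a^4 + b^4 + a^2*b^2 + 2 * (3*a^3*b + 5*a^2*b^2 + 3*a*b^3)"
  by (simp add: eval_nat_numeral) algebra
lemma es3sq: fixes a b :: "'a::idom"
  shows "(es 3 [a, b, a + b])^2 = a^4*b^2 + a^2*b^4 + 2 * (a^3*b^3)"
  by (simp add: eval_nat_numeral) algebra

lemma dick2_res: "eval_subst (Var(2:=0)) dick2 = d1^2"
proof -
  have "d1^2 = xa^4 + xb^4 + xa^2*xb^2" using es2sq[of xa xb] by (simp add: d1_def)
  moreover have "eval_subst (Var(2:=0)) dick2 = xa^4 + xb^4 + xa^2*xb^2"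
    by (simp add: dick2_def eval_add eval_mult eval_power)
  ultimately show ?thesis by simp
qed

lemma dick1_res: "eval_subst (Var(2:=0)) dick1 = d0^2"
proof -
  have "d0^2 = xa^4*xb^2 + xa^2*xb^4" using es3sq[of xa xb] by (simp add: d0_def)
  moreover have "eval_subst (Var(2:=0)) dick1 = xa^4*xb^2 + xa^2*xb^4"
    by (simp add: dick1_def eval_add eval_mult eval_power)
  ultimately show ?thesis by simp
qed

lemma dick0_res: "eval_subst (Var(2:=0)) dick0 = 0"
  by (simp add: dick0_prod eval_add eval_mult)

lemma d1_res: "eval_subst (Var(1:=0)) d1 = xa^2"
  by (simp add: d1_def es_eval eval_nat_numeral eval_add eval_mult power2_eq_square)

lemma d0_res: "eval_subst (Var(1:=0)) d0 = 0"
  by (simp add: d0_prod eval_add eval_mult)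

lemma NL_deg: "x \<in> set NL \<Longrightarrow> deg_le 1 x"
  unfolding NL_def by (auto intro!: deg_le_add deg_le_Var)
lemma NL_pol: "x \<in> set NL \<Longrightarrow> polys_on {..<3} x"
  unfolding NL_def by (auto intro!: polys_on_add)

lemma dick_props:
  "deg_le 4 dick2" "deg_le 6 dick1" "deg_le 7 dick0"
  "polys_on {..<3} dick2" "polys_on {..<3} dick1" "polys_on {..<3} dick0"
  unfolding dick2_es dick1_es dick0_es
  by (rule es_deg es_polys_on; erule NL_deg NL_pol)+

lemma dick_inv3: "eval_subst SA3 dick2 = dick2" "eval_subst SB3 dick2 = dick2"
  "eval_subst SA3 dick1 = dick1" "eval_subst SB3 dick1 = dick1"
  "eval_subst SA3 dick0 = dick0" "eval_subst SB3 dick0 = dick0"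
  unfolding dick2_es dick1_es dick0_es by (rule dick_inv)+

inductive A2 :: "nat \<Rightarrow> mpoly \<Rightarrow> bool" where
  A2c: "A2 N (Const c)"
| A2add: "A2 N p \<Longrightarrow> A2 N q \<Longrightarrow> A2 N (p + q)"
| A2d1: "A2 N p \<Longrightarrow> N + 2 \<le> M \<Longrightarrow> A2 M (d1 * p)"
| A2d0: "A2 N p \<Longrightarrow> N + 3 \<le> M \<Longrightarrow> A2 M (d0 * p)"

inductive A3 :: "nat \<Rightarrow> mpoly \<Rightarrow> bool" where
  A3c: "A3 N (Const c)"
| A3add: "A3 N p \<Longrightarrow> A3 N q \<Longrightarrow> A3 N (p + q)"
| A3d2: "A3 N p \<Longrightarrow> N + 4 \<le> M \<Longrightarrow> A3 M (dick2 * p)"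
| A3d1: "A3 N p \<Longrightarrow> N + 6 \<le> M \<Longrightarrow> A3 M (dick1 * p)"
| A3d0: "A3 N p \<Longrightarrow> N + 7 \<le> M \<Longrightarrow> A3 M (dick0 * p)"

lemma A2_mono: "A2 N p \<Longrightarrow> N \<le> M \<Longrightarrow> A2 M p"
proof (induction arbitrary: M rule: A2.induct)
  case (A2d1 N p M') then show ?case using A2.A2d1 by force
next
  case (A2d0 N p M') then show ?case using A2.A2d0 by force
qed (auto intro: A2.intros)

lemma A3_mono: "A3 N p \<Longrightarrow> N \<le> M \<Longrightarrow> A3 M p"
proof (induction arbitrary: M rule: A3.induct)
  case (A3d2 N p M') then show ?case using A3.A3d2 by force
next
  case (A3d1 N p M') then show ?case using A3.A3d1 by force
next
  case (A3d0 N p M') then show ?case using A3.A3d0 by force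
qed (auto intro: A3.intros)

lemma A2_0: "A2 N 0" using A2c[of N 0] by simp
lemma A3_0: "A3 N 0" using A3c[of N 0] by simp

lemma A2_cmul: "A2 N p \<Longrightarrow> A2 N (Const c * p)"
proof (induction rule: A2.induct)
  case (A2c N c')
  then show ?case by (metis A2.A2c Const_mult)
next
  case (A2add N p q) then show ?case by (simp add: distrib_left A2.A2add)
next
  case (A2d1 N p M) then show ?case by (metis A2.A2d1 mult.left_commute)
next
  case (A2d0 N p M) then show ?case by (metis A2.A2d0 mult.left_commute)
qed

lemma A2_sum: "(\<And>a. a \<in> A \<Longrightarrow> A2 N (f a)) \<Longrightarrow> A2 N (sum f A)"
  by (induction A rule: infinite_finite_induct) (auto intro: A2_0 A2add)

lemma A2_d1pow: "A2 (2 * e) (d1 ^ e)"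
proof (induction e)
  case 0 then show ?case using A2c[of 0 1] by simp
next
  case (Suc e) then show ?case using A2d1[of "2*e" "d1^e" "2 * Suc e"] by simp
qed

lemma A2_props:
  assumes "A2 N p"
  shows "polys_on {0,1} p \<and> deg_le N p \<and> eval_subst SS2 p = p \<and> eval_subst TT2 p = p"
  using assms
proof (induction rule: A2.induct)
  case (A2add N p q) then show ?case by (auto simp: eval_add)
next
  case (A2d1 N p M)
  then have "deg_le (2 + N) (d1 * p)" using d1_props by (intro deg_le_mult) auto
  then show ?case using A2d1 d1_props d1_inv by (auto simp: eval_mult elim: deg_le_mono)
next
  case (A2d0 N p M)
  then have "deg_le (3 + N) (d0 * p)" using d0_props by (intro deg_le_mult) auto
  then show ?case using A2d0 d0_props d0_inv by (auto simp: eval_mult elim: deg_le_mono)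
qed simp

lemma A3_props:
  assumes "A3 N p"
  shows "polys_on {..<3} p \<and> deg_le N p \<and> eval_subst SA3 p = p \<and> eval_subst SB3 p = p
         \<and> (\<exists>r. polys_on {..<3} r \<and> dickson_eval r = p)"
  using assms
proof (induction rule: A3.induct)
  case (A3c N c)
  then show ?case by (auto intro!: exI[of _ "Const c"] simp: dickson_eval_def)
next
  case (A3add N p q)
  then obtain r1 r2 where "polys_on {..<3} r1" "dickson_eval r1 = p" "polys_on {..<3} r2" "dickson_eval r2 = q"
    by blast
  then have "\<exists>r. polys_on {..<3} r \<and> dickson_eval r = p + q"
    by (intro exI[of _ "r1 + r2"]) (auto simp: dickson_eval_def eval_add)
  then show ?case using A3add by (auto simp: eval_add)
next
  case (A3d2 N p M)
  then obtain r where "polys_on {..<3} r" "dickson_eval r = p" by blast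
  then have "\<exists>r. polys_on {..<3} r \<and> dickson_eval r = dick2 * p"
    by (intro exI[of _ "Var 2 * r"]) (auto simp: dickson_eval_def eval_mult)
  moreover have "deg_le (4 + N) (dick2 * p)" using A3d2 dick_props by (intro deg_le_mult) auto
  ultimately show ?case using A3d2 dick_props dick_inv3 by (auto simp: eval_mult elim: deg_le_mono)
next
  case (A3d1 N p M)
  then obtain r where "polys_on {..<3} r" "dickson_eval r = p" by blast
  then have "\<exists>r. polys_on {..<3} r \<and> dickson_eval r = dick1 * p"
    by (intro exI[of _ "Var 1 * r"]) (auto simp: dickson_eval_def eval_mult)
  moreover have "deg_le (6 + N) (dick1 * p)" using A3d1 dick_props by (intro deg_le_mult) auto
  ultimately show ?case using A3d1 dick_props dick_inv3 by (auto simp: eval_mult elim: deg_le_mono)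
next
  case (A3d0 N p M)
  then obtain r where "polys_on {..<3} r" "dickson_eval r = p" by blast
  then have "\<exists>r. polys_on {..<3} r \<and> dickson_eval r = dick0 * p"
    by (intro exI[of _ "Var 0 * r"]) (auto simp: dickson_eval_def eval_mult)
  moreover have "deg_le (7 + N) (dick0 * p)" using A3d0 dick_props by (intro deg_le_mult) auto
  ultimately show ?case using A3d0 dick_props dick_inv3 by (auto simp: eval_mult elim: deg_le_mono)
qed

lemma lift23: "A2 N k \<Longrightarrow> \<exists>g. A3 (2 * N) g \<and> eval_subst (Var(2:=0)) g = k ^ 2"
proof (induction rule: A2.induct)
  case (A2c N c)
  then show ?case by (intro exI[of _ "Const c"]) (simp add: A3c Const_power2)
next
  case (A2add N p q)
  then obtain g1 g2 where g: "A3 (2*N) g1" "eval_subst (Var(2:=0)) g1 = p^2"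
    "A3 (2*N) g2" "eval_subst (Var(2:=0)) g2 = q^2" by blast
  have "eval_subst (Var(2:=0)) (g1 + g2) = (p + q)^2"
    by (simp only: eval_add g(2) g(4) sq_add_mpoly)
  then show ?case using g(1,3) A3add by blast
next
  case (A2d1 N p M)
  then obtain g where g: "A3 (2*N) g" "eval_subst (Var(2:=0)) g = p^2" by blast
  have "eval_subst (Var(2:=0)) (dick2 * g) = (d1 * p)^2"
    by (simp only: eval_mult g(2) dick2_res power_mult_distrib)
  moreover have "A3 (2 * M) (dick2 * g)" using g(1) A2d1(2) by (intro A3d2) auto
  ultimately show ?case by blast
next
  case (A2d0 N p M)
  then obtain g where g: "A3 (2*N) g" "eval_subst (Var(2:=0)) g = p^2" by blast
  have "eval_subst (Var(2:=0)) (dick1 * g) = (d0 * p)^2"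
    by (simp only: eval_mult g(2) dick1_res power_mult_distrib)
  moreover have "A3 (2 * M) (dick1 * g)" using g(1) A2d0(2) by (intro A3d1) auto
  ultimately show ?case by blast
qed

section \<open>Dickson's theorem in two variables\<close>

lemma vanish_by_inv:
  assumes h0: "eval_subst (Var(r:=0)) h = 0" and hW: "eval_subst W h = h"
    and PW: "eval_subst P (W r) = 0"
  shows "eval_subst P h = 0"
proof -
  let ?Q = "cmp W P"
  have Q: "cmp (Var(r:=0)) ?Q = ?Q"
    by (auto simp: fun_eq_iff cmp_def PW)
  have "eval_subst P h = eval_subst P (eval_subst W h)" using hW by simp
  also have "\<dots> = eval_subst ?Q h" by (simp add: eval_cmp)
  also have "\<dots> = eval_subst (cmp (Var(r:=0)) ?Q) h" using Q by simp
  also have "\<dots> = eval_subst ?Q (eval_subst (Var(r:=0)) h)" by (simp only: eval_cmp)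
  also have "\<dots> = 0" using h0 by simp
  finally show ?thesis .
qed

lemma inv2_tau:
  assumes "eval_subst SS2 k = k" "eval_subst TT2 k = k" "polys_on {0,1} k"
  shows "eval_subst (Var(1 := xa + xb)) k = k"
  by (rule inv_agree[OF _ assms(3), of "cmp (cmp SS2 TT2) SS2"])
     (simp add: assms inv_cmp, auto simp: cmp_def lin_simps2)

lemma one_var_mono:
  assumes "KS mo \<subseteq> {0}"
  shows "mv \<sigma> mo = \<sigma> 0 ^ LK mo 0" and "tdeg mo = LK mo 0"
proof -
  have e: "KS mo - {0} = {}" using assms by auto
  show "mv \<sigma> mo = \<sigma> 0 ^ LK mo 0" unfolding mv_split[of \<sigma> mo 0] e by simp
  show "tdeg mo = LK mo 0" using tdeg_superset[of "{0}" mo] assms by simp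
qed

lemma A2_lift1:
  assumes mV: "polys_on {0} m" and md: "deg_le E m"
  shows "A2 (2 * E) (eval_subst (Var(0 := d1)) m)"
  unfolding eval_subst_def mv_def[symmetric]
proof (rule A2_sum)
  fix mo assume mo: "mo \<in> KS m"
  then have k: "KS mo \<subseteq> {0}" using mV by (auto simp: polys_on_def)
  have "tdeg mo \<le> E" using md mo by (auto simp: deg_le_def)
  then have "LK mo 0 \<le> E" using one_var_mono(2)[OF k] by simp
  then have "A2 (2 * E) (d1 ^ LK mo 0)" using A2_d1pow A2_mono by (metis mult_le_mono2)
  then show "A2 (2 * E) (Const (LK m mo) * mv (Var(0 := d1)) mo)"
    using one_var_mono(1)[OF k, of "Var(0 := d1)"] by (simp add: A2_cmul)
qed

lemma d1_res': "eval_subst (Var(Suc 0 := 0)) d1 = xa^2"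
  using d1_res by simp

lemma deg_le_restrict: "deg_le N p \<Longrightarrow> deg_le N (eval_subst (Var(r := 0)) p)"
  by (rule deg_le_eval) (auto intro: deg_le_Var)

lemma mult_cancel_mpoly: "(c::mpoly) \<noteq> 0 \<Longrightarrow> c * x = c * y \<Longrightarrow> x = y"
  by simp

theorem dickson2:
  "polys_on {0,1} k \<Longrightarrow> deg_le N k \<Longrightarrow> eval_subst SS2 k = k \<Longrightarrow> eval_subst TT2 k = k \<Longrightarrow> A2 N k"
proof (induction N arbitrary: k rule: less_induct)
  case (less N k)
  note kV = less.prems(1) and kd = less.prems(2) and kS = less.prems(3) and kT = less.prems(4)
  have kV': "polys_on (insert 1 {0}) k" using kV by (simp add: insert_commute)
  have sqH: "\<And>j. j \<in> {0} \<Longrightarrow> eval_subst (Var(j := Var j + Var 1)) k = k"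
  proof -
    fix j :: nat assume "j \<in> {0}"
    then have j: "j = 0" by simp
    have "Var(j := Var j + Var 1) = TT2" unfolding j TT2_def by (rule refl)
    then show "eval_subst (Var(j := Var j + Var 1)) k = k" by (subst \<open>Var(j := Var j + Var 1) = TT2\<close>) (rule kT)
  qed
  define p0 where "p0 = eval_subst (Var(1:=0)) k"
  have p0V: "polys_on {0} p0"
    using square_lemma(1)[of 1 "{0}" k] kV' sqH by (simp add: p0_def)
  have p0e: "\<And>m l. m \<in> KS p0 \<Longrightarrow> even (LK m l)"
    using square_lemma(2)[of 1 "{0}" k] kV' sqH by (simp add: p0_def)
  have p0d: "deg_le N p0" unfolding p0_def by (rule deg_le_restrict[OF kd])
  define m where "m = sqrtp p0"
  have msq: "m^2 = p0" using sqrtp_sq[OF p0e] m_def by simp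
  have mV: "polys_on {0} m" using polys_on_sqrtp[OF p0V] m_def by simp
  have md: "deg_le (N div 2) m" using deg_le_sqrtp[OF p0d p0e] m_def by simp
  define g where "g = eval_subst (Var(0 := d1)) m"
  have gA: "A2 N g"
    using A2_lift1[OF mV md] A2_mono[of "2 * (N div 2)" g N] by (simp add: g_def)
  have gP: "polys_on {0,1} g" "deg_le N g" "eval_subst SS2 g = g" "eval_subst TT2 g = g"
    using A2_props[OF gA] by auto
  have "eval_subst (Var(1:=0)) g = eval_subst (cmp (Var(0 := d1)) (Var(1:=0))) m"
    by (simp add: g_def eval_cmp)
  also have "\<dots> = eval_subst (\<lambda>i. Var i ^ 2) m"
    by (rule eval_cong_on[OF mV]) (simp add: cmp_def d1_res d1_res')
  also have "\<dots> = p0" using frob[of m] msq by simp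
  finally have gres: "eval_subst (Var(1:=0)) g = p0" .
  define h where "h = k + g"
  have hV: "polys_on {0,1} h" using kV gP by (simp add: h_def polys_on_add)
  have hd: "deg_le N h" using kd gP by (simp add: h_def deg_le_add)
  have hS: "eval_subst SS2 h = h" using kS gP by (simp add: h_def eval_add)
  have hT: "eval_subst TT2 h = h" using kT gP by (simp add: h_def eval_add)
  have h0: "eval_subst (Var(1:=0)) h = 0" using gres by (simp add: h_def eval_add p0_def)
  obtain h1 where h1: "h = (Var 1 + 0) * h1" "deg_le (N-1) h1" "N = 0 \<longrightarrow> h1 = 0" "polys_on {0,1} h1"
    using factor_vanish[OF h0 hd deg_le_0 hV polys_on_0] by auto
  have ha: "eval_subst (Var(0:=0)) h = 0"
    by (rule vanish_by_inv[OF h0 hS]) (simp add: SS2_def)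
  then have "Var 1 * eval_subst (Var(0:=0)) h1 = 0" using h1(1) by (simp add: eval_mult)
  then have h1a: "eval_subst (Var(0:=0)) h1 = 0" by simp
  obtain h2 where h2: "h1 = (Var 0 + 0) * h2" "deg_le (N-1-1) h2" "N-1 = 0 \<longrightarrow> h2 = 0" "polys_on {0,1} h2"
    using factor_vanish[OF h1a h1(2) deg_le_0 h1(4) polys_on_0] by auto
  have hTau: "eval_subst (Var(1 := xa + xb)) h = h" by (rule inv2_tau[OF hS hT hV])
  have hab: "eval_subst (Var(0 := Var 1)) h = 0"
    by (rule vanish_by_inv[OF h0 hTau]) (simp add: eval_add)
  then have "Var 1 * (Var 1 * eval_subst (Var(0 := Var 1)) h2) = 0"
    using h1(1) h2(1) by (simp add: eval_mult)
  then have h2b: "eval_subst (Var(0 := Var 1)) h2 = 0" by simp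
  obtain h3 where h3: "h2 = (Var 0 + Var 1) * h3" "deg_le (N-1-1-1) h3" "N-1-1 = 0 \<longrightarrow> h3 = 0"
      "polys_on {0,1} h3"
    using factor_vanish[OF h2b h2(2) deg_le_lin(1) h2(4)] by auto
  have hprod: "h = d0 * h3" using h1(1) h2(1) h3(1) by (simp add: d0_prod mult_ac)
  have h3S: "eval_subst SS2 h3 = h3"
    using hS d0_nz d0_inv(1) unfolding hprod by (simp add: eval_mult)
  have h3T: "eval_subst TT2 h3 = h3"
    using hT d0_nz d0_inv(2) unfolding hprod by (simp add: eval_mult)
  have kgh: "k = g + h" by (simp add: h_def add_ac)
  show "A2 N k"
  proof (cases "h3 = 0")
    case True
    then show ?thesis using gA kgh hprod by simp
  next
    case False
    then have N3: "3 \<le> N" using h3(3) by auto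
    have "A2 (N-1-1-1) h3" by (rule less.IH[OF _ h3(4) h3(2) h3S h3T]) (use N3 in auto)
    then have "A2 N (d0 * h3)" by (rule A2d0) (use N3 in auto)
    then show ?thesis using gA kgh hprod A2add by metis
  qed
qed

section \<open>Dickson's theorem in three variables\<close>

lemma Var_add_eq0 [simp]: "Var i + Var j = 0 \<longleftrightarrow> i = j"
  using Var_inj add_eq_iff_mpoly by auto

lemma Var3_nz: "i \<noteq> j \<Longrightarrow> i \<noteq> k \<Longrightarrow> j \<noteq> k \<Longrightarrow> Var i + Var j + Var k \<noteq> 0"
proof
  assume "i \<noteq> j" "i \<noteq> k" "j \<noteq> k" "Var i + Var j + Var k = 0"
  then have "LK (Var i + Var j + Var k) (SG i 1) = 0" by simp
  moreover have "SG j 1 \<noteq> SG i (1::nat)" "SG k 1 \<noteq> SG i (1::nat)"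
    using \<open>i \<noteq> j\<close> \<open>i \<noteq> k\<close> by (metis lookup_single_eq lookup_single_not_eq one_neq_zero)+
  ultimately show False by (simp add: lookup_add Var_def lookup_single)
qed

lemma res_commute:
  assumes fW: "eval_subst W f = f" and fV: "polys_on {..<3} f"
    and ag: "\<And>i. i \<in> {..<3} \<Longrightarrow> cmp (Var(2:=0)) S i = cmp W (Var(2:=0)) i"
  shows "eval_subst S (eval_subst (Var(2:=0)) f) = eval_subst (Var(2:=0)) f"
proof -
  have "eval_subst S (eval_subst (Var(2:=0)) f) = eval_subst (cmp (Var(2:=0)) S) f"
    by (simp add: eval_cmp)
  also have "\<dots> = eval_subst (cmp W (Var(2:=0))) f" by (rule eval_cong_on[OF fV ag])
  also have "\<dots> = eval_subst (Var(2:=0)) f" by (simp add: eval_cmp fW)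
  finally show ?thesis .
qed

lemma sq_inj_mpoly: "(x::mpoly)^2 = y^2 \<Longrightarrow> x = y"
proof -
  assume "x^2 = y^2"
  then have "(x + y)^2 = 0" by (simp add: sq_add_mpoly)
  then have "x + y = 0" by simp
  then show "x = y" by (subst add_eq_iff_mpoly)
qed

lemma sq_inv:
  assumes "eval_subst S (k^2) = k^2"
  shows "eval_subst S k = k"
proof -
  have "(eval_subst S k)^2 = k^2" using assms by (simp add: eval_power)
  then show ?thesis by (rule sq_inj_mpoly)
qed

theorem dickson3:
  "polys_on {..<3} f \<Longrightarrow> deg_le N f \<Longrightarrow> eval_subst SA3 f = f \<Longrightarrow> eval_subst SB3 f = f \<Longrightarrow> A3 N f"
proof (induction N arbitrary: f rule: less_induct)
  case (less N f)
  note fV = less.prems(1) and fd = less.prems(2) and fA = less.prems(3) and fB = less.prems(4)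
  note W = inv3_words[OF fA fB fV]
  have fV': "polys_on (insert 2 {0,1}) f"
  proof -
    have "{..<3::nat} = insert 2 {0,1}" by auto
    then show ?thesis using fV by simp
  qed
  have sqH: "\<And>j. j \<in> {0,1} \<Longrightarrow> eval_subst (Var(j := Var j + Var 2)) f = f"
  proof -
    fix j :: nat assume "j \<in> {0,1}"
    then have "j = 0 \<or> j = 1" by simp
    then show "eval_subst (Var(j := Var j + Var 2)) f = f"
    proof
      assume j: "j = 0"
      have "Var(j := Var j + Var 2) = SA3" unfolding j SA3_def by (rule refl)
      then show ?thesis by (subst \<open>Var(j := Var j + Var 2) = SA3\<close>) (rule fA)
    next
      assume j: "j = 1"
      have "Var(j := Var j + Var 2) = Var(1 := xb + xc)" unfolding j by (rule refl)
      then show ?thesis by (subst \<open>Var(j := Var j + Var 2) = Var(1 := xb + xc)\<close>) (rule W(1))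
    qed
  qed
  define p0 where "p0 = eval_subst (Var(2:=0)) f"
  have p0V: "polys_on {0,1} p0"
    using square_lemma(1)[of 2 "{0,1}" f] fV' sqH by (simp add: p0_def)
  have p0e: "\<And>m l. m \<in> KS p0 \<Longrightarrow> even (LK m l)"
    using square_lemma(2)[of 2 "{0,1}" f] fV' sqH by (simp add: p0_def)
  have p0d: "deg_le N p0" unfolding p0_def by (rule deg_le_restrict[OF fd])
  define k where "k = sqrtp p0"
  have ksq: "k^2 = p0" using sqrtp_sq[OF p0e] k_def by simp
  have kV: "polys_on {0,1} k" using polys_on_sqrtp[OF p0V] k_def by simp
  have kd: "deg_le (N div 2) k" using deg_le_sqrtp[OF p0d p0e] k_def by simp
  have p0S: "eval_subst SS2 p0 = p0" unfolding p0_def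
    by (rule res_commute[OF W(2) fV]) (auto dest!: less3_cases simp: cmp_def lin_simps2)
  have p0T: "eval_subst TT2 p0 = p0" unfolding p0_def
    by (rule res_commute[OF W(3) fV]) (auto dest!: less3_cases simp: cmp_def lin_simps2)
  have kS: "eval_subst SS2 k = k" by (rule sq_inv) (simp add: ksq p0S)
  have kT: "eval_subst TT2 k = k" by (rule sq_inv) (simp add: ksq p0T)
  have kA: "A2 (N div 2) k" by (rule dickson2[OF kV kd kS kT])
  obtain g where g: "A3 (2 * (N div 2)) g" "eval_subst (Var(2:=0)) g = k^2"
    using lift23[OF kA] by blast
  have gA: "A3 N g" using g(1) A3_mono by fastforce
  have gP: "polys_on {..<3} g" "deg_le N g" "eval_subst SA3 g = g" "eval_subst SB3 g = g"
    using A3_props[OF gA] by auto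
  define h where "h = f + g"
  have hV: "polys_on {..<3} h" using fV gP by (simp add: h_def polys_on_add)
  have hd: "deg_le N h" using fd gP by (simp add: h_def deg_le_add)
  have hA: "eval_subst SA3 h = h" using fA gP by (simp add: h_def eval_add)
  have hB: "eval_subst SB3 h = h" using fB gP by (simp add: h_def eval_add)
  note WH = inv3_words[OF hA hB hV]
  have h0: "eval_subst (Var(2:=0)) h = 0" using g(2) ksq by (simp add: h_def eval_add p0_def)
  have V2: "2 \<in> {..<3::nat}" "1 \<in> {..<3::nat}" "0 \<in> {..<3::nat}" by auto
  have pq: "polys_on {..<3} (Var 0 + Var 1)" by (auto intro!: polys_on_add)
  obtain h1 where h1: "h = (Var 2 + 0) * h1" "deg_le (N-1) h1" "N = 0 \<longrightarrow> h1 = 0" "polys_on {..<3} h1"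
    using factor_vanish[OF h0 hd deg_le_0 hV polys_on_0 V2(1)] by auto
  have hb: "eval_subst (Var(1:=0)) h = 0"
    by (rule vanish_by_inv[OF h0 WH(4)]) simp
  then have h1b: "eval_subst (Var(1:=0)) h1 = 0" using h1(1) by (simp add: eval_mult eval_add)
  obtain h2 where h2: "h1 = (Var 1 + 0) * h2" "deg_le (N-1-1) h2" "N-1 = 0 \<longrightarrow> h2 = 0" "polys_on {..<3} h2"
    using factor_vanish[OF h1b h1(2) deg_le_0 h1(4) polys_on_0 V2(2)] by auto
  have ha: "eval_subst (Var(0:=0)) h = 0"
    by (rule vanish_by_inv[OF h0 WH(5)]) simp
  then have h2a: "eval_subst (Var(0:=0)) h2 = 0" using h1(1) h2(1) by (simp add: eval_mult eval_add)
  obtain h3 where h3: "h2 = (Var 0 + 0) * h3" "deg_le (N-1-1-1) h3" "N-1-1 = 0 \<longrightarrow> h3 = 0" "polys_on {..<3} h3"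
    using factor_vanish[OF h2a h2(2) deg_le_0 h2(4) polys_on_0 V2(3)] by auto
  have hab: "eval_subst (Var(0 := Var 1)) h = 0"
    by (rule vanish_by_inv[OF h0 WH(6)]) (simp add: eval_add)
  then have h3ab: "eval_subst (Var(0 := Var 1)) h3 = 0"
    using h1(1) h2(1) h3(1) by (simp add: eval_mult eval_add)
  obtain h4 where h4: "h3 = (Var 0 + Var 1) * h4" "deg_le (N-1-1-1-1) h4" "N-1-1-1 = 0 \<longrightarrow> h4 = 0" "polys_on {..<3} h4"
    using factor_vanish[OF h3ab h3(2) deg_le_lin(1) h3(4) _ V2(3)] by auto
  have hac: "eval_subst (Var(2 := Var 0)) h = 0"
    by (rule vanish_by_inv[OF h0 WH(7)]) (simp add: eval_add)
  then have h4ac: "eval_subst (Var(2 := Var 0)) h4 = 0"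
    using h1(1) h2(1) h3(1) h4(1) by (simp add: eval_mult eval_add)
  obtain h5 where h5: "h4 = (Var 2 + Var 0) * h5" "deg_le (N-1-1-1-1-1) h5" "N-1-1-1-1 = 0 \<longrightarrow> h5 = 0" "polys_on {..<3} h5"
    using factor_vanish[OF h4ac h4(2) deg_le_lin(1) h4(4) _ V2(1)] by auto
  have hbc: "eval_subst (Var(2 := Var 1)) h = 0"
    by (rule vanish_by_inv[OF h0 WH(8)]) (simp add: eval_add)
  then have h5bc: "eval_subst (Var(2 := Var 1)) h5 = 0"
    using h1(1) h2(1) h3(1) h4(1) h5(1) by (simp add: eval_mult eval_add add_ac)
  obtain h6 where h6: "h5 = (Var 2 + Var 1) * h6" "deg_le (N-1-1-1-1-1-1) h6" "N-1-1-1-1-1 = 0 \<longrightarrow> h6 = 0" "polys_on {..<3} h6"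
    using factor_vanish[OF h5bc h5(2) deg_le_lin(1) h5(4) _ V2(1)] by auto
  have habc: "eval_subst (Var(2 := Var 0 + Var 1)) h = 0"
    by (rule vanish_by_inv[OF h0 WH(9)]) (simp add: eval_add add_ac)
  then have h6abc: "eval_subst (Var(2 := Var 0 + Var 1)) h6 = 0"
    using h1(1) h2(1) h3(1) h4(1) h5(1) h6(1) by (simp add: eval_mult eval_add add_ac)
  obtain h7 where h7: "h6 = (Var 2 + (Var 0 + Var 1)) * h7" "deg_le (N-1-1-1-1-1-1-1) h7"
      "N-1-1-1-1-1-1 = 0 \<longrightarrow> h7 = 0" "polys_on {..<3} h7"
    using factor_vanish[OF h6abc h6(2) deg_le_lin(2) h6(4) pq V2(1)] by auto
  have hprod: "h = dick0 * h7"
    using h1(1) h2(1) h3(1) h4(1) h5(1) h6(1) h7(1) by (simp add: dick0_prod mult_ac add_ac)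
  have d0nz: "dick0 \<noteq> 0" using Var3_nz[of 0 1 2] by (simp add: dick0_prod)
  have h7A: "eval_subst SA3 h7 = h7"
    using hA d0nz dick_inv3(5) unfolding hprod by (simp add: eval_mult)
  have h7B: "eval_subst SB3 h7 = h7"
    using hB d0nz dick_inv3(6) unfolding hprod by (simp add: eval_mult)
  have fgh: "f = g + h" by (simp add: h_def add_ac)
  show "A3 N f"
  proof (cases "h7 = 0")
    case True
    then show ?thesis using gA fgh hprod by simp
  next
    case False
    then have N7: "7 \<le> N" using h7(3) by auto
    have "A3 (N-1-1-1-1-1-1-1) h7" by (rule less.IH[OF _ h7(4) h7(2) h7A h7B]) (use N7 in auto)
    then have "A3 N (dick0 * h7)" by (rule A3d0) (use N7 in auto)
    then show ?thesis using gA fgh hprod A3add by metis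
  qed
qed

section \<open>Algebraic independence\<close>

lemma d0_res': "eval_subst (Var(Suc 0 := 0)) d0 = 0"
  using d0_res by simp

definition E2 :: "nat \<Rightarrow> mpoly" where "E2 = Var(1 := d0, 2 := d1)"

lemma indep2:
  "polys_on {1,2} s \<Longrightarrow> deg_le N s \<Longrightarrow> eval_subst E2 s = 0 \<Longrightarrow> s = 0"
proof (induction N arbitrary: s rule: less_induct)
  case (less N s)
  note sV = less.prems(1) and sd = less.prems(2) and sE = less.prems(3)
  obtain s' where s': "s = eval_subst (Var(1:=0)) s + (Var 1 + 0) * s'" "deg_le (N - 1) s'"
      "N = 0 \<longrightarrow> s' = 0" "polys_on {1,2} s'"
    using factor[OF sd deg_le_0 sV polys_on_0, of 1] by auto
  define s0 where "s0 = eval_subst (Var(1:=0)) s"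
  have s0V: "polys_on {2} s0" unfolding s0_def by (rule polys_on_eval[OF sV]) auto
  have sdec: "s = s0 + (Var 1 + 0) * s'" using s'(1) by (simp only: s0_def)
  have "eval_subst E2 s = eval_subst E2 (s0 + (Var 1 + 0) * s')" by (rule arg_cong[OF sdec])
  also have "\<dots> = eval_subst E2 s0 + d0 * eval_subst E2 s'"
    by (simp add: eval_add eval_mult E2_def)
  finally have "eval_subst E2 s = eval_subst E2 s0 + d0 * eval_subst E2 s'" .
  then have e1: "eval_subst E2 s0 + d0 * eval_subst E2 s' = 0" using sE by simp
  have "eval_subst (Var(1:=0)) (eval_subst E2 s0) = eval_subst (cmp E2 (Var(1:=0))) s0"
    by (simp add: eval_cmp)
  also have "\<dots> = eval_subst (cmp (Var(2 := xa)) (\<lambda>i. Var i ^ 2)) s0"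
    by (rule eval_cong_on[OF s0V]) (simp add: cmp_def E2_def d1_res d1_res')
  also have "\<dots> = (eval_subst (Var(2 := xa)) s0)^2"
    by (simp add: eval_cmp frob[symmetric])
  finally have "(eval_subst (Var(2 := xa)) s0)^2 = eval_subst (Var(1:=0)) (eval_subst E2 s0)" by simp
  also have "\<dots> = eval_subst (Var(1:=0)) (eval_subst E2 s0 + d0 * eval_subst E2 s')"
    by (simp add: eval_add eval_mult d0_res d0_res')
  also have "\<dots> = 0" using e1 by simp
  finally have "eval_subst (Var(2 := xa)) s0 = 0" by simp
  then have "eval_subst (Var(0 := xc, 2 := xa)) (eval_subst (Var(2 := xa)) s0) = 0" by simp
  moreover have "eval_subst (Var(0 := xc, 2 := xa)) (eval_subst (Var(2 := xa)) s0) = s0"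
  proof -
    have "eval_subst (Var(0 := xc, 2 := xa)) (eval_subst (Var(2 := xa)) s0)
          = eval_subst (cmp (Var(2 := xa)) (Var(0 := xc, 2 := xa))) s0" by (simp add: eval_cmp)
    also have "\<dots> = eval_subst Var s0"
      by (rule eval_cong_on[OF s0V]) (simp add: cmp_def)
    finally show ?thesis by simp
  qed
  ultimately have s00: "s0 = 0" by simp
  then have "d0 * eval_subst E2 s' = 0" using e1 by simp
  then have "eval_subst E2 s' = 0" using d0_nz by simp
  then have "s' = 0"
  proof (cases "N = 0")
    case True then show ?thesis using s'(3) by simp
  next
    case False
    show ?thesis by (rule less.IH[OF _ s'(4) s'(2)]) (use False \<open>eval_subst E2 s' = 0\<close> in auto)
  qed
  then show "s = 0" using s'(1) s00 by (simp add: s0_def)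
qed

lemma d0_nz3: "dick0 \<noteq> 0"
  using Var3_nz[of 0 1 2] by (simp add: dick0_prod)

definition DS :: "nat \<Rightarrow> mpoly" where
  "DS = (\<lambda>i. if i = 0 then dick0 else if i = 1 then dick1 else if i = 2 then dick2 else 0)"

lemma dickson_eval_DS: "dickson_eval = eval_subst DS"
  by (simp add: dickson_eval_def DS_def)

lemma indep3:
  "polys_on {..<3} r \<Longrightarrow> deg_le N r \<Longrightarrow> dickson_eval r = 0 \<Longrightarrow> r = 0"
proof (induction N arbitrary: r rule: less_induct)
  case (less N r)
  note rV = less.prems(1) and rd = less.prems(2) and rE = less.prems(3)
  have V0: "0 \<in> {..<3::nat}" by simp
  obtain r' where r': "r = eval_subst (Var(0:=0)) r + (Var 0 + 0) * r'" "deg_le (N - 1) r'"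
      "N = 0 \<longrightarrow> r' = 0" "polys_on {..<3} r'"
    using factor[OF rd deg_le_0 rV polys_on_0 V0] by auto
  define r0 where "r0 = eval_subst (Var(0:=0)) r"
  have r0V: "polys_on {1,2} r0" unfolding r0_def by (rule polys_on_eval[OF rV]) auto
  have r0d: "deg_le N r0" unfolding r0_def by (rule deg_le_restrict[OF rd])
  have "dickson_eval r = dickson_eval r0 + dick0 * dickson_eval r'"
    by (subst r'(1)) (simp add: eval_add eval_mult dickson_eval_DS DS_def r0_def)
  then have e1: "dickson_eval r0 + dick0 * dickson_eval r' = 0" using rE by simp
  have "eval_subst (Var(2:=0)) (dickson_eval r0) = eval_subst (cmp DS (Var(2:=0))) r0"
    by (simp add: eval_cmp dickson_eval_DS)
  also have "\<dots> = eval_subst (cmp E2 (\<lambda>i. Var i ^ 2)) r0"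
    by (rule eval_cong_on[OF r0V]) (auto simp: cmp_def DS_def E2_def dick1_res dick2_res frob[symmetric])
  also have "\<dots> = (eval_subst E2 r0)^2"
    by (simp add: eval_cmp frob[symmetric])
  finally have "(eval_subst E2 r0)^2 = eval_subst (Var(2:=0)) (dickson_eval r0)" by simp
  also have "\<dots> = eval_subst (Var(2:=0)) (dickson_eval r0 + dick0 * dickson_eval r')"
    by (simp add: eval_add eval_mult dick0_res)
  also have "\<dots> = 0" using e1 by simp
  finally have "eval_subst E2 r0 = 0" by simp
  then have r00: "r0 = 0" by (rule indep2[OF r0V r0d])
  then have "dick0 * dickson_eval r' = 0" using e1 by (simp add: dickson_eval_DS)
  then have "dickson_eval r' = 0" using d0_nz3 by simp
  then have "r' = 0"
  proof (cases "N = 0")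
    case True then show ?thesis using r'(3) by simp
  next
    case False
    show ?thesis by (rule less.IH[OF _ r'(4) r'(2)]) (use False \<open>dickson_eval r' = 0\<close> in auto)
  qed
  then show "r = 0" using r'(1) r00 by (simp add: r0_def)
qed

section \<open>Lifts of the Dickson invariants\<close>

definition O6 :: "mpoly list" where
  "O6 = [Var 0, Var 1, Var 2, Var 0 + Var 2 + Var 5, Var 0 + Var 1 + Var 3, Var 1 + Var 2 + Var 4,
         Var 0 + Var 1 + Var 2 + Var 3 + Var 4 + Var 5]"

lemmas lin_simps6 = SA6_def SB6_def eval_add eval_Var fun_upd_apply add_ac add_self_mpoly add_self_mpoly2

lemma O6_inv: "eval_subst SA6 (es k O6) = es k O6" "eval_subst SB6 (es k O6) = es k O6"
  by (rule trans[OF es_eval es_perm], simp add: O6_def lin_simps6 add_mset_commute)+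

lemma O6_rho: "rho (es k O6) = es k NL"
  by (simp add: rho_eval es_eval O6_def NL_def rsub_def eval_add)

lemma homogeneous_Var': "homogeneous (Suc 0) (Var i)"
  using homogeneous_Var by simp

lemma O6_elems: "x \<in> set O6 \<Longrightarrow> polys_on {..<6} x \<and> homogeneous 1 x"
  unfolding O6_def by (auto intro!: polys_on_add homogeneous_add homogeneous_Var homogeneous_Var')

lemma O6_pol: "polys_on {..<6} (es k O6)"
  by (rule es_polys_on) (use O6_elems in blast)

lemma O6_hom: "homogeneous k (es k O6)"
  by (rule es_homogeneous) (use O6_elems in blast)

lemma O6_Inv6: "es k O6 \<in> Inv6"
  using O6_pol O6_inv by (simp add: Inv6_iff polys_in_on)

lemma dickson_surj:
  assumes "q \<in> Inv3"
  shows "\<exists>r\<in>polys_in 3. dickson_eval r = q"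
proof -
  have q: "polys_on {..<3} q" "eval_subst SA3 q = q" "eval_subst SB3 q = q"
    using assms by (auto simp: Inv3_iff polys_in_on)
  obtain N where "deg_le N q" using deg_le_exists by blast
  then have "A3 N q" using dickson3 q by blast
  from A3_props[OF this] obtain r where "polys_on {..<3} r" "dickson_eval r = q" by blast
  then show ?thesis by (auto simp: polys_in_on)
qed

lemma DS_props: "i \<in> {..<3} \<Longrightarrow> polys_on {..<3} (DS i) \<and> eval_subst SA3 (DS i) = DS i \<and> eval_subst SB3 (DS i) = DS i"
  by (auto dest!: less3_cases simp: DS_def dick_props dick_inv3)

lemma dickson_in_Inv3:
  assumes r: "r \<in> polys_in 3"
  shows "dickson_eval r \<in> Inv3"
proof -
  have rV: "polys_on {..<3} r" using r by (simp add: polys_in_on)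
  have "polys_on {..<3} (eval_subst DS r)"
    by (rule polys_on_eval[OF rV]) (use DS_props in blast)
  moreover have "eval_subst SA3 (eval_subst DS r) = eval_subst DS r"
  proof -
    have "eval_subst SA3 (eval_subst DS r) = eval_subst (cmp DS SA3) r" by (simp add: eval_cmp)
    also have "\<dots> = eval_subst DS r"
      by (rule eval_cong_on[OF rV]) (use DS_props in \<open>auto simp: cmp_def\<close>)
    finally show ?thesis .
  qed
  moreover have "eval_subst SB3 (eval_subst DS r) = eval_subst DS r"
  proof -
    have "eval_subst SB3 (eval_subst DS r) = eval_subst (cmp DS SB3) r" by (simp add: eval_cmp)
    also have "\<dots> = eval_subst DS r"
      by (rule eval_cong_on[OF rV]) (use DS_props in \<open>auto simp: cmp_def\<close>)
    finally show ?thesis .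
  qed
  ultimately show ?thesis by (simp add: Inv3_iff polys_in_on dickson_eval_DS)
qed

lemma rho_polys: "p \<in> polys_in 6 \<Longrightarrow> rho p \<in> polys_in 3"
  unfolding polys_in_on rho_eval
  by (rule polys_on_eval[of "{..<6}"]) (auto simp: rsub_def)

theorem mainTheorem12:
  shows "rho ` polys_in 6 = polys_in 3
       \<and> (\<forall>g\<in>DG. \<forall>p\<in>polys_in 6. rho (act 6 g p) = act 3 g (rho p))
       \<and> rho ` Inv6 = Inv3
       \<and> bij_betw dickson_eval (polys_in 3) Inv3
       \<and> (\<exists>p\<in>Inv6. homogeneous 7 p \<and> rho p = dick0)
       \<and> (\<exists>p\<in>Inv6. homogeneous 6 p \<and> rho p = dick1)
       \<and> (\<exists>p\<in>Inv6. homogeneous 4 p \<and> rho p = dick2)"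
proof (intro conjI)
  show P1: "rho ` polys_in 6 = polys_in 3"
  proof
    show "rho ` polys_in 6 \<subseteq> polys_in 3" using rho_polys by blast
    show "polys_in 3 \<subseteq> rho ` polys_in 6"
    proof
      fix q assume q: "q \<in> polys_in 3"
      have "rho q = q" unfolding rho_eval
        by (rule eval_id_on[of "{..<3}"]) (use q in \<open>auto simp: polys_in_on rsub_def\<close>)
      moreover have "q \<in> polys_in 6"
        using q polys_on_mono[of "{..<3}" q "{..<6}"] by (auto simp: polys_in_on)
      ultimately show "q \<in> rho ` polys_in 6" by (metis image_eqI)
    qed
  qed
  show "\<forall>g\<in>DG. \<forall>p\<in>polys_in 6. rho (act 6 g p) = act 3 g (rho p)"
    using rho_act by blast
  show "rho ` Inv6 = Inv3"
  proof
    show "rho ` Inv6 \<subseteq> Inv3"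
    proof
      fix q assume "q \<in> rho ` Inv6"
      then obtain p where p: "p \<in> Inv6" "q = rho p" by blast
      have p6: "p \<in> polys_in 6" using p by (simp add: Inv6_def)
      have "act 3 g q = q" if "g \<in> DG" for g
        using rho_act[OF that p6] p that by (simp add: Inv6_def)
      then show "q \<in> Inv3" using rho_polys[OF p6] p by (simp add: Inv3_def)
    qed
    show "Inv3 \<subseteq> rho ` Inv6"
    proof
      fix q assume q: "q \<in> Inv3"
      obtain r where r: "r \<in> polys_in 3" "dickson_eval r = q" using dickson_surj[OF q] by blast
      have rV: "polys_on {..<3} r" using r by (simp add: polys_in_on)
      define LS where "LS = (\<lambda>i::nat. if i = 0 then es 7 O6 else if i = 1 then es 6 O6 else if i = 2 then es 4 O6 else 0)"
      have LSi: "\<And>i. i \<in> {..<3} \<Longrightarrow> LS i \<in> Inv6 \<and> rho (LS i) = DS i"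
        by (auto dest!: less3_cases simp: LS_def DS_def O6_Inv6 O6_rho dick0_es dick1_es dick2_es)
      define L where "L = eval_subst LS r"
      have "polys_on {..<6} L" unfolding L_def
        by (rule polys_on_eval[OF rV]) (use LSi in \<open>auto simp: Inv6_iff polys_in_on\<close>)
      moreover have "eval_subst SA6 L = L"
      proof -
        have "eval_subst SA6 L = eval_subst (cmp LS SA6) r" by (simp add: L_def eval_cmp)
        also have "\<dots> = L" unfolding L_def
          by (rule eval_cong_on[OF rV]) (use LSi in \<open>auto simp: cmp_def Inv6_iff\<close>)
        finally show ?thesis .
      qed
      moreover have "eval_subst SB6 L = L"
      proof -
        have "eval_subst SB6 L = eval_subst (cmp LS SB6) r" by (simp add: L_def eval_cmp)
        also have "\<dots> = L" unfolding L_def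
          by (rule eval_cong_on[OF rV]) (use LSi in \<open>auto simp: cmp_def Inv6_iff\<close>)
        finally show ?thesis .
      qed
      ultimately have LI: "L \<in> Inv6" by (simp add: Inv6_iff polys_in_on)
      have "rho L = eval_subst (cmp LS rsub) r" by (simp add: L_def rho_eval eval_cmp)
      also have "\<dots> = eval_subst DS r"
        by (rule eval_cong_on[OF rV]) (use LSi in \<open>auto simp: cmp_def rho_eval\<close>)
      also have "\<dots> = q" using r(2) by (simp add: dickson_eval_DS)
      finally show "q \<in> rho ` Inv6" using LI by (metis image_eqI)
    qed
  qed
  show "bij_betw dickson_eval (polys_in 3) Inv3"
    unfolding bij_betw_def
  proof
    show "inj_on dickson_eval (polys_in 3)"
    proof (rule inj_onI)
      fix x y assume x: "x \<in> polys_in 3" and y: "y \<in> polys_in 3" and e: "dickson_eval x = dickson_eval y"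
      have "dickson_eval (x + y) = 0" using e by (simp add: dickson_eval_DS eval_add)
      moreover have "polys_on {..<3} (x + y)" using x y by (simp add: polys_in_on polys_on_add)
      moreover obtain N where "deg_le N (x + y)" using deg_le_exists by blast
      ultimately have "x + y = 0" using indep3 by blast
      then show "x = y" by (subst add_eq_iff_mpoly)
    qed
    show "dickson_eval ` polys_in 3 = Inv3"
      using dickson_in_Inv3 dickson_surj by blast
  qed
  show "\<exists>p\<in>Inv6. homogeneous 7 p \<and> rho p = dick0"
    using O6_Inv6[of 7] O6_hom[of 7] O6_rho[of 7] dick0_es by auto
  show "\<exists>p\<in>Inv6. homogeneous 6 p \<and> rho p = dick1"
    using O6_Inv6[of 6] O6_hom[of 6] O6_rho[of 6] dick1_es by auto
  show "\<exists>p\<in>Inv6. homogeneous 4 p \<and> rho p = dick2"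
    using O6_Inv6[of 4] O6_hom[of 4] O6_rho[of 4] dick2_es by auto
qed

end
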